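(* Let $X$ be a compact metric space, $\rho$ a Borel probability measure on $X\times Y$ ($Y\subseteq\mathbb{R}$) with marginal $\rho_X$ and regression function $f_\rho$. Let $K$ be a positive-definite continuous reproducing kernel on $X$ such that the closed linear span of $\{K(\cdot,x):x\in X\}$ in $C(X)$ equals $C(X)$. Let $\mathcal{B}=\{f_\mu=\int_X K(t,\cdot)\,d\mu(t):\mu\in\mathcal{M}(X)\}$ with $\|f_\mu\|_{\mathcal B}=\|\mu\|$ (total variation). Let $\{\phi_j\}_{j\in\mathbb{N}}$ be an orthonormal basis of $L^2_{\rho_X}$ of eigenfunctions of $L_K$ with eigenvalues $\lambda_1\ge\lambda_2\ge\cdots$, and suppose $f_\rho=\sum_{j}\lambda_j^s a_j\phi_j$ for some $s>0$ and some $h=\sum_j a_j\phi_j\in L^2_{\rho_X}$. For $\lambda>0$ and $g\in\mathcal{B}$ put $\mathcal{D}(\lambda,g)=\mathcal{E}(g)-\mathcal{E}(f_\rho)+\lambda\|g\|_{\mathcal B}$. Then: if $0<s<1$, $$\inf_{g\in\mathcal{B}}\mathcal{D}(\lambda,g)\le\big(\|h\|_{L^2_{\rho_X}}+\|h\|_{L^2_{\rho_X}}^2\big)\lambda^{\frac{2s}{1+s}};$$ if $s\ge 1$, then $f_\rho\in\mathcal{B}$ and $$\mathcal{D}(\lambda,f_\rho)\le\lambda_1^{s-1}\|h\|_{L^2_{\rho_X}}\,\lambda.$$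
   Context: $\mathcal{M}(X)$ is the space of signed Borel measures on $X$ of bounded total variation. $\mathcal{E}(f)=\int_{X\times Y}|f(x)-y|^2\,d\rho$; $f_\rho(x)=\int_Y y\,d\rho(y|x)$. $L_K$ is the operator on $L^2_{\rho_X}$ defined by $L_Kf=\int_X K(t,\cdot)f(t)\,d\rho_X(t)$. *)

theory Defs
  imports "HOL-Probability.Probability"
begin

definition pos_def_kernel :: "('a \<Rightarrow> 'a \<Rightarrow> real) \<Rightarrow> bool" where
  "pos_def_kernel K \<longleftrightarrow> (\<forall>x y. K x y = K y x) \<and>
     (\<forall>(xs :: 'a list) (c :: real list). length c = length xs \<longrightarrow>
        0 \<le> (\<Sum>i<length xs. \<Sum>j<length xs. c!i * c!j * K (xs!i) (xs!j)))"

definition finite_borel :: "'a::topological_space measure \<Rightarrow> bool" where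
  "finite_borel \<mu> \<longleftrightarrow> finite_measure \<mu> \<and> sets \<mu> = sets (borel :: 'a measure)"

text \<open>A signed Borel measure of bounded variation is represented as a difference
  \<open>\<mu>1 - \<mu>2\<close> of two finite Borel measures (Jordan decomposition).\<close>
definition tot_var :: "'a::topological_space measure \<Rightarrow> 'a measure \<Rightarrow> real" where
  "tot_var \<mu>1 \<mu>2 = Sup {(\<Sum>i<n. \<bar>measure \<mu>1 (A i) - measure \<mu>2 (A i)\<bar>) | (n::nat) A.
      disjoint_family_on A {..<n} \<and> (\<forall>i<n. A i \<in> sets \<mu>1) \<and>
      (\<Union>i<n. A i) = UNIV}"

definition f_meas :: "('a \<Rightarrow> 'a \<Rightarrow> real) \<Rightarrow> 'a measure \<Rightarrow> 'a measure \<Rightarrow> 'a \<Rightarrow> real" where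
  "f_meas K \<mu>1 \<mu>2 x = (\<integral>t. K t x \<partial>\<mu>1) - (\<integral>t. K t x \<partial>\<mu>2)"

definition marginal :: "('a::topological_space \<times> real) measure \<Rightarrow> 'a measure" where
  "marginal \<rho> = distr \<rho> borel fst"

definition ls_error :: "('a \<times> real) measure \<Rightarrow> ('a \<Rightarrow> real) \<Rightarrow> real" where
  "ls_error \<rho> f = (\<integral>z. (f (fst z) - snd z)^2 \<partial>\<rho>)"

text \<open>\<open>f\<close> is (a version of) the regression function \<open>f_\<rho>(x) = \<integral> y d\<rho>(y|x)\<close>, i.e.
  \<open>f_\<rho>(X) = E[Y | X]\<close>.\<close>
definition regression_fun :: "('a::topological_space \<times> real) measure \<Rightarrow> ('a \<Rightarrow> real) \<Rightarrow> bool" where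
  "regression_fun \<rho> f \<longleftrightarrow> f \<in> borel_measurable borel \<and>
     (AE z in \<rho>. f (fst z) = real_cond_exp \<rho> (vimage_algebra (space \<rho>) fst borel) snd z)"

definition sq_int :: "'a measure \<Rightarrow> ('a \<Rightarrow> real) \<Rightarrow> bool" where
  "sq_int \<nu> f \<longleftrightarrow> f \<in> borel_measurable \<nu> \<and> integrable \<nu> (\<lambda>x. (f x)^2)"

definition L2_norm_m :: "'a measure \<Rightarrow> ('a \<Rightarrow> real) \<Rightarrow> real" where
  "L2_norm_m \<nu> f = sqrt (\<integral>x. (f x)^2 \<partial>\<nu>)"

definition L2_onb :: "'a measure \<Rightarrow> (nat \<Rightarrow> 'a \<Rightarrow> real) \<Rightarrow> bool" where
  "L2_onb \<nu> \<phi> \<longleftrightarrow> (\<forall>j. sq_int \<nu> (\<phi> j)) \<and>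
     (\<forall>i j. (\<integral>x. \<phi> i x * \<phi> j x \<partial>\<nu>) = (if i = j then 1 else 0)) \<and>
     (\<forall>g. sq_int \<nu> g \<longrightarrow> (\<forall>e>0. \<exists>n c. L2_norm_m \<nu> (\<lambda>x. g x - (\<Sum>j<n. c j * \<phi> j x)) < e))"

definition int_op :: "('a \<Rightarrow> 'a \<Rightarrow> real) \<Rightarrow> 'a measure \<Rightarrow> ('a \<Rightarrow> real) \<Rightarrow> 'a \<Rightarrow> real" where
  "int_op K \<nu> f x = (\<integral>t. K t x * f t \<partial>\<nu>)"

end

theory Submission
  imports Defs
begin

locale kset = prob_space M for M :: "'a::metric_space measure" +
  fixes K :: "'a \<Rightarrow> 'a \<Rightarrow> real"
  assumes sets_M: "sets M = sets borel"
    and Kc: "continuous_on UNIV (\<lambda>(x,y). K x y)"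
    and cpt: "compact (UNIV::'a set)"
begin

lemma space_M[simp]: "space M = UNIV"
  using sets_eq_imp_space_eq[OF sets_M] by simp

lemma meas_iff: "f \<in> borel_measurable M \<longleftrightarrow> f \<in> borel_measurable borel"
  using measurable_cong_sets[OF sets_M refl] by blast

lemma K_bdd: "\<exists>B>0. \<forall>t x. \<bar>K t x\<bar> \<le> B"
proof -
  have c2: "compact ((UNIV::'a set) \<times> (UNIV::'a set))" by (rule compact_Times[OF cpt cpt])
  have "compact ((\<lambda>(x,y). K x y) ` UNIV)"
    using compact_continuous_image[OF Kc] c2 by simp
  then have "bounded ((\<lambda>(x,y). K x y) ` UNIV)" by (rule compact_imp_bounded)
  then obtain B where B: "B > 0" "\<And>z. z \<in> (\<lambda>(x,y). K x y) ` UNIV \<Longrightarrow> norm z \<le> B"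
    by (meson bounded_pos)
  show ?thesis using B by (intro exI[of _ B]) force
qed

definition "KB = (SOME B. B > 0 \<and> (\<forall>t x. \<bar>K t x\<bar> \<le> B))"

lemma KB: "KB > 0" "\<bar>K t x\<bar> \<le> KB"
  using someI_ex[OF K_bdd] unfolding KB_def by auto

lemma Kt_cont: "continuous_on UNIV (\<lambda>t. K t x)"
proof -
  have "continuous_on UNIV ((\<lambda>(x,y). K x y) \<circ> (\<lambda>t. (t,x)))"
    by (intro continuous_on_compose continuous_intros continuous_on_subset[OF Kc]) auto
  then show ?thesis by (simp add: o_def)
qed

lemma Kt_meas[measurable]: "(\<lambda>t. K t x) \<in> borel_measurable M"
  unfolding meas_iff using Kt_cont by (rule borel_measurable_continuous_onI)

lemma int_Kg: "integrable M g \<Longrightarrow> integrable M (\<lambda>t. K t x * g t)"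
  by (rule Bochner_Integration.integrable_bound[of _ "\<lambda>t. KB * g t"])
     (use KB in \<open>auto intro!: mult_right_mono simp: abs_mult\<close>)


lemma int_op_diff: "integrable M g1 \<Longrightarrow> integrable M g2 \<Longrightarrow>
  int_op K M g1 x - int_op K M g2 x = int_op K M (\<lambda>t. g1 t - g2 t) x"
  unfolding int_op_def by (simp add: int_Kg right_diff_distrib)

lemma int_op_bound: assumes "integrable M g"
  shows "\<bar>int_op K M g x\<bar> \<le> KB * (\<integral>t. \<bar>g t\<bar> \<partial>M)"
proof -
  have "\<bar>int_op K M g x\<bar> \<le> (\<integral>t. \<bar>K t x * g t\<bar> \<partial>M)"
    unfolding int_op_def by (rule integral_abs_bound)
  also have "\<dots> \<le> (\<integral>t. KB * \<bar>g t\<bar> \<partial>M)"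
    using assms integrable_abs[OF int_Kg[OF assms, of x]]
    by (intro integral_mono) (auto simp: abs_mult intro!: mult_right_mono KB)
  finally show ?thesis using assms by simp
qed

lemma int_op_cont: assumes g: "integrable M g"
  shows "continuous_on UNIV (int_op K M g)"
proof -
  have c2: "compact ((UNIV::'a set) \<times> (UNIV::'a set))" by (rule compact_Times[OF cpt cpt])
  have uc: "uniformly_continuous_on UNIV (\<lambda>(x,y). K x y)"
    using compact_uniformly_continuous[OF Kc] c2 by simp
  define m where "m = (\<integral>t. \<bar>g t\<bar> \<partial>M)"
  have m0: "m \<ge> 0" unfolding m_def by simp
  show ?thesis unfolding continuous_on_iff
  proof (intro ballI allI impI)
    fix x :: 'a and e :: real assume e: "e > 0"
    have "e / (m+1) > 0" using e m0 by simp
    then obtain d where d: "d > 0" and dd: "\<And>z z'. dist z' z < d \<Longrightarrow>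
        dist ((\<lambda>(x,y). K x y) z') ((\<lambda>(x,y). K x y) z) < e/(m+1)"
      using uc unfolding uniformly_continuous_on_def by blast
    show "\<exists>d>0. \<forall>y\<in>UNIV. dist y x < d \<longrightarrow> dist (int_op K M g y) (int_op K M g x) < e"
    proof (intro exI[of _ d] conjI ballI impI d)
      fix y assume y: "dist y x < d"
      have kk: "\<bar>K t y - K t x\<bar> \<le> e/(m+1)" for t
        using dd[of "(t,y)" "(t,x)"] y by (simp add: dist_Pair_Pair dist_real_def)
      have "dist (int_op K M g y) (int_op K M g x) = \<bar>int_op K M (\<lambda>t. g t) y - int_op K M g x\<bar>"
        by (simp add: dist_real_def)
      also have "\<dots> = \<bar>\<integral>t. (K t y - K t x) * g t \<partial>M\<bar>"
        unfolding int_op_def using int_Kg[OF g]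
        by (simp add: left_diff_distrib)
      also have "\<dots> \<le> (\<integral>t. \<bar>(K t y - K t x) * g t\<bar> \<partial>M)"
        by (rule integral_abs_bound)
      also have "\<dots> \<le> (\<integral>t. e/(m+1) * \<bar>g t\<bar> \<partial>M)"
      proof (rule integral_mono)
        show "integrable M (\<lambda>t. \<bar>(K t y - K t x) * g t\<bar>)"
          using int_Kg[OF g] by (simp add: left_diff_distrib)
        show "integrable M (\<lambda>t. e/(m+1) * \<bar>g t\<bar>)" using g by simp
        show "\<bar>(K t y - K t x) * g t\<bar> \<le> e/(m+1) * \<bar>g t\<bar>" for t
          using mult_right_mono[OF kk[of t], of "\<bar>g t\<bar>"] by (simp add: abs_mult)
      qed
      also have "\<dots> = e/(m+1) * m" unfolding m_def by simp
      also have "\<dots> < e" using e m0 by (simp add: field_simps)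
      finally show "dist (int_op K M g y) (int_op K M g x) < e" .
    qed
  qed
qed

lemma int_op_meas[measurable]: "integrable M g \<Longrightarrow> int_op K M g \<in> borel_measurable M"
  unfolding meas_iff by (rule borel_measurable_continuous_onI[OF int_op_cont])

lemma int_op_sum: assumes "\<And>j. integrable M (f j)"
  shows "int_op K M (\<lambda>t. \<Sum>j<n. c j * f j t) x = (\<Sum>j<n. c j * int_op K M (f j) x)"
  unfolding int_op_def using int_Kg[OF assms]
  by (simp add: sum_distrib_left mult.left_commute)

end

context prob_space begin

lemma sq_int_integrable: "sq_int M u \<Longrightarrow> integrable M u"
  unfolding sq_int_def by (auto intro: square_integrable_imp_integrable)

lemma sq_int_mult: assumes "sq_int M u" "sq_int M v"
  shows "integrable M (\<lambda>x. u x * v x)"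
proof (rule Bochner_Integration.integrable_bound[of _ "\<lambda>x. (u x)^2 + (v x)^2"])
  show "integrable M (\<lambda>x. (u x)^2 + (v x)^2)" using assms unfolding sq_int_def by auto
  show "(\<lambda>x. u x * v x) \<in> borel_measurable M" using assms unfolding sq_int_def by auto
  show "AE x in M. norm (u x * v x) \<le> norm ((u x)^2 + (v x)^2)"
  proof (rule AE_I2)
    fix x
    have "2 * \<bar>u x\<bar> * \<bar>v x\<bar> \<le> (u x)^2 + (v x)^2"
      using sum_squares_bound[of "\<bar>u x\<bar>" "\<bar>v x\<bar>"] by (simp add: power2_abs)
    moreover have "0 \<le> \<bar>u x\<bar> * \<bar>v x\<bar>" by simp
    ultimately have "\<bar>u x\<bar> * \<bar>v x\<bar> \<le> (u x)^2 + (v x)^2" by linarith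
    moreover have "0 \<le> (u x)^2 + (v x)^2" by simp
    ultimately show "norm (u x * v x) \<le> norm ((u x)^2 + (v x)^2)"
      by (simp add: abs_mult)
  qed
qed

lemma sq_int_add: assumes "sq_int M u" "sq_int M v" shows "sq_int M (\<lambda>x. u x + v x)"
proof -
  have "integrable M (\<lambda>x. (u x)^2 + (v x)^2 + 2 * (u x * v x))"
    using assms sq_int_mult[OF assms] unfolding sq_int_def by auto
  then show ?thesis using assms unfolding sq_int_def by (auto simp: power2_sum mult.assoc)
qed

lemma sq_int_cmult: "sq_int M u \<Longrightarrow> sq_int M (\<lambda>x. c * u x)"
  unfolding sq_int_def by (auto simp: power_mult_distrib)

lemma sq_int_diff: "sq_int M (\<lambda>x. u x - v x)" if "sq_int M u" "sq_int M v"
proof -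
  have "sq_int M (\<lambda>x. u x + (-1) * v x)" by (intro sq_int_add sq_int_cmult that)
  then show ?thesis by simp
qed

lemma sq_int_sum: "(\<And>j. j \<in> A \<Longrightarrow> sq_int M (f j)) \<Longrightarrow> sq_int M (\<lambda>x. \<Sum>j\<in>A. f j x)"
proof (induction A rule: infinite_finite_induct)
  case (infinite A) then show ?case by (simp add: sq_int_def)
next
  case empty then show ?case by (simp add: sq_int_def)
next
  case (insert a A)
  have "sq_int M (\<lambda>x. f a x + (\<Sum>j\<in>A. f j x))"
    by (rule sq_int_add) (use insert in auto)
  then show ?case using insert(1,2) by simp
qed

lemma sq_int_bounded: assumes f: "f \<in> borel_measurable M" and b: "\<And>x. \<bar>f x\<bar> \<le> C"
  shows "sq_int M f"
  unfolding sq_int_def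
proof (intro conjI f, rule Bochner_Integration.integrable_bound[of _ "\<lambda>x. C^2"])
  show "integrable M (\<lambda>x. C^2)" by simp
  show "(\<lambda>x. (f x)^2) \<in> borel_measurable M" using f by simp
  show "AE x in M. norm ((f x)^2) \<le> norm (C^2)"
  proof (rule AE_I2)
    fix x have "\<bar>f x\<bar>^2 \<le> C^2" using b[of x] by (intro power_mono) auto
    then show "norm ((f x)^2) \<le> norm (C^2)" by (simp add: power2_abs)
  qed
qed

lemma L1L2: assumes "sq_int M u"
  shows "(\<integral>x. \<bar>u x\<bar> \<partial>M) \<le> sqrt (\<integral>x. (u x)^2 \<partial>M)"
proof -
  define m where "m = (\<integral>x. \<bar>u x\<bar> \<partial>M)"
  have iu: "integrable M u" using assms sq_int_integrable by blast
  have iu2: "integrable M (\<lambda>x. (u x)^2)" using assms unfolding sq_int_def by auto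
  have "0 \<le> (\<integral>x. (\<bar>u x\<bar> - m)^2 \<partial>M)" by simp
  also have "\<dots> = (\<integral>x. (u x)^2 - 2 * m * \<bar>u x\<bar> + m^2 \<partial>M)"
    by (rule arg_cong[where f="integral\<^sup>L M"]) (auto simp: power2_diff power2_abs algebra_simps)
  also have "\<dots> = (\<integral>x. (u x)^2 \<partial>M) - 2 * m * m + m^2"
    using iu iu2 prob_space unfolding m_def by simp
  finally have "m^2 \<le> (\<integral>x. (u x)^2 \<partial>M)" by (simp add: power2_eq_square)
  then show ?thesis unfolding m_def by (simp add: real_le_rsqrt)
qed

end


locale konb = kset +
  fixes \<phi> :: "nat \<Rightarrow> 'a \<Rightarrow> real"
  assumes onb: "L2_onb M \<phi>"
begin

lemma phi_sq: "sq_int M (\<phi> j)" using onb unfolding L2_onb_def by auto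
lemma phi_int: "integrable M (\<phi> j)" using phi_sq sq_int_integrable by blast
lemma phi_meas[measurable]: "\<phi> j \<in> borel_measurable M" using phi_sq unfolding sq_int_def by auto
lemma phi_orth: "(\<integral>x. \<phi> i x * \<phi> j x \<partial>M) = (if i = j then 1 else 0)"
  using onb unfolding L2_onb_def by auto

lemma comb_sq: "sq_int M (\<lambda>x. \<Sum>j<n. c j * \<phi> j x)"
  by (intro sq_int_sum sq_int_cmult phi_sq)

lemma orth_sum: "(\<integral>x. (\<Sum>j<n. c j * \<phi> j x) * (\<Sum>j<n. d j * \<phi> j x) \<partial>M) = (\<Sum>j<n. c j * d j)"
proof -
  have "(\<integral>x. (\<Sum>j<n. c j * \<phi> j x) * (\<Sum>j<n. d j * \<phi> j x) \<partial>M)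
      = (\<integral>x. (\<Sum>i<n. \<Sum>j<n. c i * d j * (\<phi> i x * \<phi> j x)) \<partial>M)"
    by (simp add: sum_product mult_ac)
  also have "\<dots> = (\<Sum>i<n. \<Sum>j<n. c i * d j * (\<integral>x. \<phi> i x * \<phi> j x \<partial>M))"
    using sq_int_mult[OF phi_sq phi_sq] by (simp add: integral_sum)
  also have "\<dots> = (\<Sum>j<n. c j * d j)"
    by (simp add: phi_orth if_distrib cong: if_cong)
  finally show ?thesis .
qed

lemma inner_sum: assumes "sq_int M h"
  shows "(\<integral>x. h x * (\<Sum>j<n. c j * \<phi> j x) \<partial>M) = (\<Sum>j<n. c j * (\<integral>x. h x * \<phi> j x \<partial>M))"
proof -
  have "(\<integral>x. h x * (\<Sum>j<n. c j * \<phi> j x) \<partial>M) = (\<integral>x. (\<Sum>j<n. c j * (h x * \<phi> j x)) \<partial>M)"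
    by (simp add: sum_distrib_left mult_ac)
  also have "\<dots> = (\<Sum>j<n. c j * (\<integral>x. h x * \<phi> j x \<partial>M))"
    using sq_int_mult[OF assms phi_sq] by (simp add: integral_sum)
  finally show ?thesis .
qed

lemma bessel: assumes h: "sq_int M h"
  shows "(\<Sum>j<n. (\<integral>x. h x * \<phi> j x \<partial>M)^2) \<le> (\<integral>x. (h x)^2 \<partial>M)"
proof -
  define a where "a j = (\<integral>x. h x * \<phi> j x \<partial>M)" for j
  define S where "S x = (\<Sum>j<n. a j * \<phi> j x)" for x
  have hS: "integrable M (\<lambda>x. h x * S x)" unfolding S_def by (rule sq_int_mult[OF h comb_sq])
  have SS: "integrable M (\<lambda>x. S x * S x)" unfolding S_def by (rule sq_int_mult[OF comb_sq comb_sq])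
  have hh: "integrable M (\<lambda>x. (h x)^2)" using h unfolding sq_int_def by auto
  have "0 \<le> (\<integral>x. (h x - S x)^2 \<partial>M)" by simp
  also have "\<dots> = (\<integral>x. (h x)^2 - 2 * (h x * S x) + S x * S x \<partial>M)"
    by (rule arg_cong[where f="integral\<^sup>L M"]) (auto simp: power2_eq_square algebra_simps)
  also have "\<dots> = (\<integral>x. (h x)^2 \<partial>M) - 2 * (\<integral>x. h x * S x \<partial>M) + (\<integral>x. S x * S x \<partial>M)"
    using hS SS hh by simp
  also have "(\<integral>x. h x * S x \<partial>M) = (\<Sum>j<n. a j * a j)"
    unfolding S_def by (simp add: inner_sum[OF h] a_def)
  also have "(\<integral>x. S x * S x \<partial>M) = (\<Sum>j<n. a j * a j)"
    unfolding S_def by (rule orth_sum)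
  finally show ?thesis by (simp add: a_def power2_eq_square)
qed

end

locale rset = prob_space R for R :: "('a::metric_space \<times> real) measure" +
  fixes fr :: "'a \<Rightarrow> real"
  assumes sets_R: "sets R = sets borel"
    and mom: "integrable R (\<lambda>z. (snd z)^2)"
    and reg: "regression_fun R fr"
begin

lemma space_R[simp]: "space R = UNIV"
  using sets_eq_imp_space_eq[OF sets_R] by simp

lemma fst_meas[measurable]: "fst \<in> measurable R borel"
proof -
  have "fst \<in> measurable (borel :: ('a \<times> real) measure) borel"
    by (intro borel_measurable_continuous_onI continuous_intros)
  then show ?thesis using measurable_cong_sets[OF sets_R refl] by blast
qed

lemma snd_meas[measurable]: "snd \<in> borel_measurable R"
proof -
  have "snd \<in> measurable (borel :: ('a \<times> real) measure) borel"
    by (intro borel_measurable_continuous_onI continuous_intros)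
  then show ?thesis using measurable_cong_sets[OF sets_R refl] by blast
qed

lemma fr_meas[measurable]: "fr \<in> borel_measurable borel"
  using reg unfolding regression_fun_def by auto

abbreviation "\<nu> \<equiv> marginal R"

lemma prob_nu: "prob_space \<nu>"
  unfolding marginal_def by (rule prob_space_distr) simp

lemma sets_nu: "sets \<nu> = sets borel"
  unfolding marginal_def by simp

lemma space_nu[simp]: "space \<nu> = UNIV"
  unfolding marginal_def by simp

lemma meas_nu: "f \<in> borel_measurable \<nu> \<longleftrightarrow> f \<in> borel_measurable borel"
  using measurable_cong_sets[OF sets_nu refl] by blast

lemma int_nu: fixes g :: "'a \<Rightarrow> real" shows "g \<in> borel_measurable borel \<Longrightarrow> integral\<^sup>L \<nu> g = (\<integral>z. g (fst z) \<partial>R)"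
  unfolding marginal_def by (rule integral_distr[OF fst_meas])

lemma integrable_nu: fixes g :: "'a \<Rightarrow> real" shows "g \<in> borel_measurable borel \<Longrightarrow> integrable \<nu> g \<longleftrightarrow> integrable R (\<lambda>z. g (fst z))"
  unfolding marginal_def by (rule integrable_distr_eq[OF fst_meas])

lemma AE_nu: "AE x in \<nu>. P x \<Longrightarrow> AE z in R. P (fst z)"
  unfolding marginal_def by (rule AE_distrD[OF fst_meas])

definition "FF = vimage_algebra (space R) fst (borel :: 'a measure)"

lemma subalg: "subalgebra R FF"
  unfolding subalgebra_def FF_def
  using sets_image_in_sets[OF refl fst_meas] by simp

lemma sfs: "sigma_finite_subalgebra R FF"
  by (rule finite_measure_subalgebra_is_sigma_finite)
     (simp add: finite_measure_subalgebra_def finite_measure_subalgebra_axioms_def subalg finite_measure_axioms)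

lemma comp_FF: "g \<in> borel_measurable borel \<Longrightarrow> (\<lambda>z. g (fst z)) \<in> borel_measurable FF"
  unfolding FF_def
  by (rule measurable_compose[OF measurable_vimage_algebra1]) auto

lemma fr_ce: "AE z in R. fr (fst z) = real_cond_exp R FF snd z"
  using reg unfolding regression_fun_def FF_def by auto

lemma fr_sq: "sq_int \<nu> fr"
proof -
  interpret sigma_finite_subalgebra R FF by (rule sfs)
  have iY: "integrable R snd"
    using square_integrable_imp_integrable[OF snd_meas mom] .
  have J: "AE z in R. (real_cond_exp R FF snd z)^2 \<le> real_cond_exp R FF (\<lambda>z. (snd z)^2) z"
    using real_cond_exp_jensens_inequality(2)[of snd UNIV _ _ power2, OF iY]
    using mom convex_power2 by auto
  have i2: "integrable R (\<lambda>z. (real_cond_exp R FF snd z)^2)"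
  proof (rule Bochner_Integration.integrable_bound[OF real_cond_exp_int(1)[OF mom]])
    show "(\<lambda>z. (real_cond_exp R FF snd z)^2) \<in> borel_measurable R" by measurable
    show "AE z in R. norm ((real_cond_exp R FF snd z)^2) \<le> norm (real_cond_exp R FF (\<lambda>z. (snd z)^2) z)"
      using J by eventually_elim auto
  qed
  have "integrable R (\<lambda>z. (fr (fst z))^2)"
    by (rule integrable_cong_AE_imp[OF i2]) (use fr_ce in \<open>auto elim!: AE_mp\<close>)
  then show ?thesis unfolding sq_int_def meas_nu using integrable_nu[of "\<lambda>x. (fr x)^2"] by simp
qed


lemma decomp: assumes f: "f \<in> borel_measurable borel" "sq_int \<nu> f"
  shows "ls_error R f - ls_error R fr = (\<integral>x. (f x - fr x)^2 \<partial>\<nu>)"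
proof -
  interpret sigma_finite_subalgebra R FF by (rule sfs)
  interpret N: prob_space \<nu> by (rule prob_nu)
  define w where "w x = f x - fr x" for x
  have wm[measurable]: "w \<in> borel_measurable borel" unfolding w_def using f by measurable
  have wsq: "sq_int \<nu> w" unfolding w_def by (rule N.sq_int_diff[OF f(2) fr_sq])
  have liftsq: "sq_int R (\<lambda>z. g (fst z))" if "sq_int \<nu> g" "g \<in> borel_measurable borel" for g
    using that integrable_nu[of "\<lambda>x. (g x)^2"] unfolding sq_int_def by auto
  have W: "sq_int R (\<lambda>z. w (fst z))" by (rule liftsq[OF wsq wm])
  have C: "sq_int R (\<lambda>z. fr (fst z))" by (rule liftsq[OF fr_sq fr_meas])
  have Y: "sq_int R snd" using mom unfolding sq_int_def by auto
  have CY: "sq_int R (\<lambda>z. fr (fst z) - snd z)" by (rule sq_int_diff[OF C Y])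
  have i1: "integrable R (\<lambda>z. (w (fst z))^2)" using W unfolding sq_int_def by auto
  have i2: "integrable R (\<lambda>z. w (fst z) * (fr (fst z) - snd z))" by (rule sq_int_mult[OF W CY])
  have i3: "integrable R (\<lambda>z. (fr (fst z) - snd z)^2)" using CY unfolding sq_int_def by auto
  have iWC: "integrable R (\<lambda>z. w (fst z) * fr (fst z))" by (rule sq_int_mult[OF W C])
  have iWY: "integrable R (\<lambda>z. w (fst z) * snd z)" by (rule sq_int_mult[OF W Y])
  have cross: "(\<integral>z. w (fst z) * (fr (fst z) - snd z) \<partial>R) = 0"
  proof -
    have "(\<integral>z. w (fst z) * (fr (fst z) - snd z) \<partial>R)
        = (\<integral>z. w (fst z) * fr (fst z) \<partial>R) - (\<integral>z. w (fst z) * snd z \<partial>R)"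
      using iWC iWY by (simp add: right_diff_distrib)
    also have "(\<integral>z. w (fst z) * fr (fst z) \<partial>R) = (\<integral>z. w (fst z) * real_cond_exp R FF snd z \<partial>R)"
      by (rule integral_cong_AE) (use fr_ce in \<open>auto elim!: AE_mp\<close>)
    also have "\<dots> = (\<integral>z. w (fst z) * snd z \<partial>R)"
      by (rule real_cond_exp_intg(2)[OF iWY comp_FF[OF wm] snd_meas])
    finally show ?thesis by simp
  qed
  have "ls_error R f = (\<integral>z. (w (fst z))^2 + 2 * (w (fst z) * (fr (fst z) - snd z)) + (fr (fst z) - snd z)^2 \<partial>R)"
    unfolding ls_error_def
    by (rule arg_cong[where f="integral\<^sup>L R"]) (auto simp: w_def power2_eq_square algebra_simps)
  also have "\<dots> = (\<integral>z. (w (fst z))^2 \<partial>R) + 2 * (\<integral>z. w (fst z) * (fr (fst z) - snd z) \<partial>R)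
      + (\<integral>z. (fr (fst z) - snd z)^2 \<partial>R)"
    using i1 i2 i3 by simp
  also have "(\<integral>z. (w (fst z))^2 \<partial>R) = (\<integral>x. (w x)^2 \<partial>\<nu>)"
    by (rule int_nu[symmetric]) measurable
  finally show ?thesis unfolding ls_error_def using cross by (simp add: w_def)
qed

end

lemma tv_bounds:
  fixes \<mu>1 \<mu>2 :: "'a::topological_space measure"
  assumes f1: "finite_borel \<mu>1" and f2: "finite_borel \<mu>2"
  shows "0 \<le> tot_var \<mu>1 \<mu>2" "tot_var \<mu>1 \<mu>2 \<le> measure \<mu>1 UNIV + measure \<mu>2 UNIV"
proof -
  interpret m1: finite_measure \<mu>1 using f1 unfolding finite_borel_def by auto
  interpret m2: finite_measure \<mu>2 using f2 unfolding finite_borel_def by auto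
  have s12: "sets \<mu>1 = sets \<mu>2" using f1 f2 unfolding finite_borel_def by auto
  have sp1: "space \<mu>1 = UNIV" using f1 unfolding finite_borel_def
    using sets_eq_imp_space_eq[of \<mu>1 borel] by simp
  have sp2: "space \<mu>2 = UNIV" using f2 unfolding finite_borel_def
    using sets_eq_imp_space_eq[of \<mu>2 borel] by simp
  define S where "S = {(\<Sum>i<n. \<bar>measure \<mu>1 (A i) - measure \<mu>2 (A i)\<bar>) | (n::nat) A.
      disjoint_family_on A {..<n} \<and> (\<forall>i<n. A i \<in> sets \<mu>1) \<and> (\<Union>i<n. A i) = UNIV}"
  have tv: "tot_var \<mu>1 \<mu>2 = Sup S" unfolding tot_var_def S_def ..
  have ub: "x \<le> measure \<mu>1 UNIV + measure \<mu>2 UNIV" if "x \<in> S" for x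
  proof -
    have "\<exists>(n::nat) A. x = (\<Sum>i<n. \<bar>measure \<mu>1 (A i) - measure \<mu>2 (A i)\<bar>) \<and>
      disjoint_family_on A {..<n} \<and> (\<forall>i<n. A i \<in> sets \<mu>1) \<and> (\<Union>i<n. A i) = UNIV"
      using that unfolding S_def by (simp only: mem_Collect_eq)
    then obtain n :: nat where "\<exists>A. x = (\<Sum>i<n. \<bar>measure \<mu>1 (A i) - measure \<mu>2 (A i)\<bar>) \<and>
      disjoint_family_on A {..<n} \<and> (\<forall>i<n. A i \<in> sets \<mu>1) \<and> (\<Union>i<n. A i) = UNIV" ..
    then obtain A where H: "x = (\<Sum>i<n. \<bar>measure \<mu>1 (A i) - measure \<mu>2 (A i)\<bar>) \<and>
      disjoint_family_on A {..<n} \<and> (\<forall>i<n. A i \<in> sets \<mu>1) \<and> (\<Union>i<n. A i) = UNIV" ..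
    note x = H[THEN conjunct1] and d = H[THEN conjunct2, THEN conjunct1]
      and m = H[THEN conjunct2, THEN conjunct2, THEN conjunct1]
      and u = H[THEN conjunct2, THEN conjunct2, THEN conjunct2]
    have "x \<le> (\<Sum>i<n. measure \<mu>1 (A i) + measure \<mu>2 (A i))"
      unfolding x by (intro sum_mono) (simp add: abs_le_iff measure_nonneg add_increasing add_increasing2)
    also have "\<dots> = (\<Sum>i<n. measure \<mu>1 (A i)) + (\<Sum>i<n. measure \<mu>2 (A i))"
      by (simp add: sum.distrib)
    also have "(\<Sum>i<n. measure \<mu>1 (A i)) = measure \<mu>1 (\<Union>i<n. A i)"
      using m d by (intro m1.finite_measure_finite_Union[symmetric]) auto
    also have "(\<Sum>i<n. measure \<mu>2 (A i)) = measure \<mu>2 (\<Union>i<n. A i)"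
      using m d s12 by (intro m2.finite_measure_finite_Union[symmetric]) auto
    finally show ?thesis using u by simp
  qed
  have U1: "UNIV \<in> sets \<mu>1" using sets.top[of \<mu>1] sp1 by simp
  have df: "disjoint_family_on (\<lambda>_::nat. UNIV) {..<1}"
    unfolding disjoint_family_on_def by simp
  have mem: "\<bar>measure \<mu>1 UNIV - measure \<mu>2 UNIV\<bar> \<in> S"
  proof -
    have "\<bar>measure \<mu>1 UNIV - measure \<mu>2 UNIV\<bar> = (\<Sum>i<1::nat. \<bar>measure \<mu>1 ((\<lambda>_. UNIV) i) - measure \<mu>2 ((\<lambda>_. UNIV) i)\<bar>)"
      by simp
    moreover have "\<forall>i<1::nat. (\<lambda>_. UNIV) i \<in> sets \<mu>1" using U1 by simp
    moreover have "(\<Union>i<1::nat. (\<lambda>_. UNIV) i) = UNIV" by (auto simp: lessThan_Suc)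
    note facts = calculation this df
    show ?thesis unfolding S_def mem_Collect_eq
      apply (rule exI[of _ "1::nat"])
      apply (rule exI[of _ "\<lambda>_::nat. UNIV"])
      using facts by (intro conjI) (assumption+)
  qed
  have bdd: "bdd_above S" using ub by (intro bdd_aboveI) blast
  show "0 \<le> tot_var \<mu>1 \<mu>2" unfolding tv
    using cSup_upper[OF mem bdd] by linarith
  show "tot_var \<mu>1 \<mu>2 \<le> measure \<mu>1 UNIV + measure \<mu>2 UNIV" unfolding tv
    using mem ub by (intro cSup_least) auto
qed

context kset begin

lemma dens_basic:
  assumes p: "integrable M p" and pn: "\<And>x. 0 \<le> p x"
  shows "finite_borel (density M (\<lambda>x. ennreal (p x)))"
    "measure (density M (\<lambda>x. ennreal (p x))) UNIV = (\<integral>x. p x \<partial>M)"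
    "(\<integral>t. K t x \<partial>density M (\<lambda>x. ennreal (p x))) = (\<integral>t. p t * K t x \<partial>M)"
proof -
  have pm[measurable]: "p \<in> borel_measurable M" using p by auto
  have e: "emeasure (density M (\<lambda>x. ennreal (p x))) UNIV = ennreal (\<integral>x. p x \<partial>M)"
  proof -
    have "emeasure (density M (\<lambda>x. ennreal (p x))) UNIV = (\<integral>\<^sup>+x. ennreal (p x) * indicator UNIV x \<partial>M)"
      by (rule emeasure_density) (use sets.top[of M] in auto)
    also have "\<dots> = (\<integral>\<^sup>+x. ennreal (p x) \<partial>M)" by simp
    also have "\<dots> = ennreal (\<integral>x. p x \<partial>M)"
      by (rule nn_integral_eq_integral[OF p]) (simp add: pn)
    finally show ?thesis .
  qed
  show "finite_borel (density M (\<lambda>x. ennreal (p x)))"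
    unfolding finite_borel_def
  proof
    show "finite_measure (density M (\<lambda>x. ennreal (p x)))"
      by (rule finite_measureI) (simp add: e)
    show "sets (density M (\<lambda>x. ennreal (p x))) = sets borel" by (simp add: sets_M)
  qed
  show "measure (density M (\<lambda>x. ennreal (p x))) UNIV = (\<integral>x. p x \<partial>M)"
    unfolding measure_def e using pn by (simp add: integral_nonneg_AE)
  show "(\<integral>t. K t x \<partial>density M (\<lambda>x. ennreal (p x))) = (\<integral>t. p t * K t x \<partial>M)"
    by (subst integral_density) (auto simp: pn)
qed

definition "gp g = (\<lambda>x. max (g x) 0)"
definition "gn g = (\<lambda>x. max (- g x) 0)"

lemma dens_meas:
  assumes g: "integrable M g"
  shows "finite_borel (density M (\<lambda>x. ennreal (gp g x)))"
    "finite_borel (density M (\<lambda>x. ennreal (gn g x)))"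
    "f_meas K (density M (\<lambda>x. ennreal (gp g x))) (density M (\<lambda>x. ennreal (gn g x))) x
       = int_op K M g x"
    "tot_var (density M (\<lambda>x. ennreal (gp g x))) (density M (\<lambda>x. ennreal (gn g x)))
       \<le> (\<integral>x. \<bar>g x\<bar> \<partial>M)"
proof -
  have ip: "integrable M (gp g)" unfolding gp_def using g by (intro integrable_max) auto
  have in': "integrable M (gn g)" unfolding gn_def using g by (intro integrable_max) auto
  have pp: "\<And>x. 0 \<le> gp g x" "\<And>x. 0 \<le> gn g x" by (simp_all add: gp_def gn_def)
  note P = dens_basic[OF ip pp(1)] and N = dens_basic[OF in' pp(2)]
  show "finite_borel (density M (\<lambda>x. ennreal (gp g x)))" by (rule P(1))
  show "finite_borel (density M (\<lambda>x. ennreal (gn g x)))" by (rule N(1))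
  have ipK: "integrable M (\<lambda>t. K t x * gp g t)" by (rule int_Kg[OF ip])
  have inK: "integrable M (\<lambda>t. K t x * gn g t)" by (rule int_Kg[OF in'])
  have "f_meas K (density M (\<lambda>x. ennreal (gp g x))) (density M (\<lambda>x. ennreal (gn g x))) x
     = (\<integral>t. gp g t * K t x \<partial>M) - (\<integral>t. gn g t * K t x \<partial>M)"
    unfolding f_meas_def using P(3)[of x] N(3)[of x] by simp
  also have "\<dots> = (\<integral>t. K t x * gp g t - K t x * gn g t \<partial>M)"
    using ipK inK by (simp add: mult.commute)
  also have "\<dots> = int_op K M g x"
    unfolding int_op_def
    by (rule arg_cong[where f="integral\<^sup>L M"]) (auto simp: gp_def gn_def max_def algebra_simps)
  finally show "f_meas K (density M (\<lambda>x. ennreal (gp g x))) (density M (\<lambda>x. ennreal (gn g x))) x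
       = int_op K M g x" .
  have "tot_var (density M (\<lambda>x. ennreal (gp g x))) (density M (\<lambda>x. ennreal (gn g x)))
      \<le> (\<integral>x. gp g x \<partial>M) + (\<integral>x. gn g x \<partial>M)"
    using tv_bounds(2)[OF P(1) N(1)] P(2) N(2) by simp
  also have "\<dots> = (\<integral>x. gp g x + gn g x \<partial>M)" using ip in' by simp
  also have "\<dots> = (\<integral>x. \<bar>g x\<bar> \<partial>M)"
    by (rule arg_cong[where f="integral\<^sup>L M"]) (auto simp: gp_def gn_def max_def)
  finally show "tot_var (density M (\<lambda>x. ennreal (gp g x))) (density M (\<lambda>x. ennreal (gn g x)))
       \<le> (\<integral>x. \<bar>g x\<bar> \<partial>M)" .
qed

end

context kset begin

lemma partition_exists:
  assumes r: "r > 0"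
  obtains n :: nat and P :: "nat \<Rightarrow> 'a set" and xs :: "nat \<Rightarrow> 'a"
  where "\<And>i. P i \<in> sets M" "\<And>x. (\<Sum>i<n. indicator (P i) x) = (1::real)"
    "\<And>i x. i < n \<Longrightarrow> x \<in> P i \<Longrightarrow> dist x (xs i) < r"
proof -
  obtain C' where C': "finite C'" "(UNIV::'a set) \<subseteq> (\<Union>c\<in>C'. ball c r)"
  proof (rule compactE_image[OF cpt, of UNIV "\<lambda>c. ball c r"])
    show "\<And>T. T \<in> UNIV \<Longrightarrow> open (ball T r)" by simp
    show "UNIV \<subseteq> (\<Union>c\<in>UNIV. ball c r)" using r by auto
  qed auto
  obtain l where l: "set l = C'" using finite_list[OF C'(1)] by blast
  define n where "n = length l"
  define P where "P i = ball (l!i) r - (\<Union>k<i. ball (l!k) r)" for i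
  have Pm: "P i \<in> sets M" for i
    unfolding P_def sets_M by (intro sets.Diff borel_open open_UN) auto
  have one: "(\<Sum>i<n. indicator (P i) x) = (1::real)" for x
  proof -
    have "x \<in> (\<Union>c\<in>C'. ball c r)" using C'(2) by (rule subsetD) simp
    then obtain c where c: "c \<in> C'" "x \<in> ball c r" by blast
    then obtain j where j: "j < n" "l!j = c" using l unfolding n_def by (auto simp: in_set_conv_nth)
    define i0 where "i0 = (LEAST i. i < n \<and> x \<in> ball (l!i) r)"
    have ex: "\<exists>i. i < n \<and> x \<in> ball (l!i) r" using j c by blast
    have i0: "i0 < n" "x \<in> ball (l!i0) r" using LeastI_ex[OF ex] unfolding i0_def by auto
    have nl: "\<And>k. k < i0 \<Longrightarrow> x \<notin> ball (l!k) r"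
      using not_less_Least[of _ "\<lambda>i. i < n \<and> x \<in> ball (l!i) r"] i0(1) unfolding i0_def
      by (meson order.strict_trans)
    have iff: "x \<in> P i \<longleftrightarrow> i = i0" if "i < n" for i
    proof
      assume xP: "x \<in> P i"
      then have xb: "x \<in> ball (l!i) r" unfolding P_def by auto
      have "i0 \<le> i" unfolding i0_def using that xb by (intro Least_le) auto
      moreover have "\<not> i0 < i" using xP i0(2) unfolding P_def by auto
      ultimately show "i = i0" by simp
    next
      assume "i = i0"
      then show "x \<in> P i" unfolding P_def using i0 nl by auto
    qed
    have "(\<Sum>i<n. indicator (P i) x) = (\<Sum>i<n. if i = i0 then 1 else (0::real))"
      by (rule sum.cong) (auto simp: iff indicator_def)
    also have "\<dots> = 1" using i0(1) by simp
    finally show ?thesis .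
  qed
  have dd: "dist x (l!i) < r" if "i < n" "x \<in> P i" for i x
    using that unfolding P_def by (auto simp: dist_commute)
  show ?thesis by (rule that[of P n "\<lambda>i. l!i"]) (use Pm one dd in auto)
qed


lemma int_bdd_mult: fixes f :: "'a \<Rightarrow> real" assumes f: "integrable M f" and g: "g \<in> borel_measurable M"
  and b: "\<And>x. \<bar>g x\<bar> \<le> C"
  shows "integrable M (\<lambda>x. f x * g x)"
proof (rule Bochner_Integration.integrable_bound[of _ "\<lambda>x. C * f x"])
  show "integrable M (\<lambda>x. C * f x)" using f by simp
  show "(\<lambda>x. f x * g x) \<in> borel_measurable M" using f g by measurable
  show "AE x in M. norm (f x * g x) \<le> norm (C * f x)"
  proof (rule AE_I2)
    fix x
    have "\<bar>f x\<bar> * \<bar>g x\<bar> \<le> \<bar>f x\<bar> * C" using b[of x] by (simp add: mult_left_mono)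
    also have "\<dots> \<le> \<bar>f x\<bar> * \<bar>C\<bar>" by (simp add: mult_left_mono)
    finally show "norm (f x * g x) \<le> norm (C * f x)" by (simp add: abs_mult mult.commute)
  qed
qed

lemma double_sum: "(\<Sum>i<n. \<Sum>k<n. a i * b k * c) = (\<Sum>i<n. a i) * (\<Sum>k<n. b k) * (c::real)"
proof -
  have "(\<Sum>i<n. a i) * (\<Sum>k<n. b k) * c = (\<Sum>i<n. a i * (\<Sum>k<n. b k) * c)"
    by (simp add: sum_distrib_right)
  also have "\<dots> = (\<Sum>i<n. \<Sum>k<n. a i * b k * c)"
    by (intro sum.cong refl) (simp add: sum_distrib_left sum_distrib_right mult.assoc)
  finally show ?thesis by simp
qed

lemma K_uc: "uniformly_continuous_on UNIV (\<lambda>(x,y). K x y)"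
proof -
  have c2: "compact ((UNIV::'a set) \<times> (UNIV::'a set))" by (rule compact_Times[OF cpt cpt])
  show ?thesis using compact_uniformly_continuous[OF Kc] c2 by simp
qed

lemma pd_quad:
  assumes pd: "pos_def_kernel K" and f: "integrable M f"
  shows "0 \<le> (\<integral>x. f x * int_op K M f x \<partial>M)"
proof -
  define m where "m = (\<integral>x. \<bar>f x\<bar> \<partial>M)"
  have m0: "0 \<le> m" unfolding m_def by simp
  define Q where "Q = (\<integral>x. f x * int_op K M f x \<partial>M)"
  define F where "F = int_op K M f"
  have Fm[measurable]: "F \<in> borel_measurable M" unfolding F_def by (rule int_op_meas[OF f])
  have main: "- e * (m * m) \<le> Q" if e: "e > 0" for e
  proof -
    obtain d where d: "d > 0" and dd: "\<And>z z'. dist z' z < d \<Longrightarrow>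
        dist ((\<lambda>(x,y). K x y) z') ((\<lambda>(x,y). K x y) z) < e"
      using K_uc e unfolding uniformly_continuous_on_def by blast
    have d2: "d/2 > 0" using d by simp
    obtain n :: nat and P :: "nat \<Rightarrow> 'a set" and xs :: "nat \<Rightarrow> 'a" where Pm[measurable]: "\<And>i. P i \<in> sets M"
      and one: "\<And>x. (\<Sum>i<n. indicator (P i) x) = (1::real)"
      and Pd: "\<And>i x. i < n \<Longrightarrow> x \<in> P i \<Longrightarrow> dist x (xs i) < d/2"
      by (rule partition_exists[OF d2]) blast
    define w where "w i = (\<integral>t. indicator (P i) t * f t \<partial>M)" for i
    have iw: "integrable M (\<lambda>t. indicator (P i) t * f t)" for i
      using integrable_mult_indicator[OF Pm f] by simp
    define K' where "K' t x = (\<Sum>i<n. \<Sum>k<n. indicator (P i) t * indicator (P k) x * K (xs i) (xs k))" for t x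
    define G where "G x = (\<Sum>i<n. \<Sum>k<n. indicator (P k) x * K (xs i) (xs k) * w i)" for x
    have K'm[measurable]: "(\<lambda>t. K' t x) \<in> borel_measurable M" for x unfolding K'_def by measurable
    have Gm[measurable]: "G \<in> borel_measurable M" unfolding G_def by measurable
    have KK': "\<bar>K t x - K' t x\<bar> \<le> e" for t x
    proof -
      have "K t x = (\<Sum>i<n. indicator (P i) t) * (\<Sum>k<n. indicator (P k) x) * K t x"
        by (simp add: one)
      also have "\<dots> = (\<Sum>i<n. \<Sum>k<n. indicator (P i) t * indicator (P k) x * K t x)"
        by (rule double_sum[symmetric])
      finally have eqK: "K t x = (\<Sum>i<n. \<Sum>k<n. indicator (P i) t * indicator (P k) x * K t x)" .
      have "K t x - K' t x = (\<Sum>i<n. \<Sum>k<n. indicator (P i) t * indicator (P k) x * K t x) - K' t x"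
        using eqK by (rule arg_cong[where f="\<lambda>z. z - K' t x"])
      also have "\<dots> = (\<Sum>i<n. \<Sum>k<n. indicator (P i) t * indicator (P k) x * (K t x - K (xs i) (xs k)))"
        unfolding K'_def by (simp add: sum_subtractf[symmetric] right_diff_distrib)
      also have "\<bar>\<dots>\<bar> \<le> (\<Sum>i<n. \<Sum>k<n. \<bar>indicator (P i) t * indicator (P k) x * (K t x - K (xs i) (xs k))\<bar>)"
        by (rule order_trans[OF sum_abs sum_mono]) (rule sum_abs)
      also have "\<dots> \<le> (\<Sum>i<n. \<Sum>k<n. indicator (P i) t * indicator (P k) x * e)"
      proof (intro sum_mono)
        fix i k assume ik: "i \<in> {..<n}" "k \<in> {..<n}"
        show "\<bar>indicator (P i) t * indicator (P k) x * (K t x - K (xs i) (xs k))\<bar>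
            \<le> indicator (P i) t * indicator (P k) x * e"
        proof (cases "t \<in> P i \<and> x \<in> P k")
          case True
          have a: "dist t (xs i) < d/2" "dist x (xs k) < d/2" using Pd ik True by auto
          have "dist (t, x) (xs i, xs k) \<le> dist t (xs i) + dist x (xs k)"
            unfolding dist_Pair_Pair by (rule sqrt_sum_squares_le_sum) simp_all 
          also have "\<dots> < d" using a by simp
          finally have "dist (t, x) (xs i, xs k) < d" .
          then have "\<bar>K t x - K (xs i) (xs k)\<bar> < e"
            using dd[of "(xs i, xs k)" "(t,x)"] by (simp add: dist_real_def dist_commute abs_minus_commute)
          then show ?thesis using True by simp
        next
          case False then show ?thesis by (auto simp: indicator_def)
        qed
      qed
      also have "\<dots> = (\<Sum>i<n. indicator (P i) t) * (\<Sum>k<n. indicator (P k) x) * e"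
        by (rule double_sum)
      also have "\<dots> = e" by (simp add: one)
      finally show ?thesis .
    qed
    have K'b: "\<bar>K' t x\<bar> \<le> KB + e" for t x
      using KK'[of t x] KB(2)[of t x] by linarith
    have iK': "integrable M (\<lambda>t. f t * K' t x)" for x
      by (rule int_bdd_mult[OF f K'm K'b])
    have GK: "G x = (\<integral>t. f t * K' t x \<partial>M)" for x
    proof -
      have "(\<integral>t. f t * K' t x \<partial>M)
          = (\<integral>t. (\<Sum>i<n. \<Sum>k<n. (indicator (P k) x * K (xs i) (xs k)) * (indicator (P i) t * f t)) \<partial>M)"
        unfolding K'_def by (rule arg_cong[where f="integral\<^sup>L M"], rule ext, simp only: sum_distrib_left mult_ac)
      also have "\<dots> = (\<Sum>i<n. \<Sum>k<n. (indicator (P k) x * K (xs i) (xs k)) * w i)"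
        using iw unfolding w_def by (simp add: integral_sum)
      finally show ?thesis unfolding G_def by simp
    qed
    have FG: "\<bar>F x - G x\<bar> \<le> e * m" for x
    proof -
      have "F x - G x = (\<integral>t. K t x * f t - f t * K' t x \<partial>M)"
        unfolding F_def GK int_op_def using int_Kg[OF f] iK' by simp
      also have "\<bar>\<dots>\<bar> \<le> (\<integral>t. \<bar>K t x * f t - f t * K' t x\<bar> \<partial>M)"
        by (rule integral_abs_bound)
      also have "\<dots> \<le> (\<integral>t. e * \<bar>f t\<bar> \<partial>M)"
      proof (rule integral_mono)
        show "integrable M (\<lambda>t. \<bar>K t x * f t - f t * K' t x\<bar>)"
          using int_Kg[OF f] iK' by simp
        show "integrable M (\<lambda>t. e * \<bar>f t\<bar>)" using f by simp
        fix t
        have "\<bar>K t x * f t - f t * K' t x\<bar> = \<bar>K t x - K' t x\<bar> * \<bar>f t\<bar>"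
          by (simp add: abs_mult[symmetric] algebra_simps)
        also have "\<dots> \<le> e * \<bar>f t\<bar>" by (rule mult_right_mono[OF KK']) simp
        finally show "\<bar>K t x * f t - f t * K' t x\<bar> \<le> e * \<bar>f t\<bar>" .
      qed
      also have "\<dots> = e * m" unfolding m_def by simp
      finally show ?thesis .
    qed
    have Fb: "\<bar>F x\<bar> \<le> KB * m" for x unfolding F_def m_def by (rule int_op_bound[OF f])
    have Gb: "\<bar>G x\<bar> \<le> KB * m + e * m" for x using FG[of x] Fb[of x] by linarith
    have iFf: "integrable M (\<lambda>x. f x * F x)" by (rule int_bdd_mult[OF f Fm Fb])
    have iGf: "integrable M (\<lambda>x. f x * G x)" by (rule int_bdd_mult[OF f Gm Gb])
    have QG: "\<bar>Q - (\<integral>x. f x * G x \<partial>M)\<bar> \<le> e * m * m"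
    proof -
      have "Q - (\<integral>x. f x * G x \<partial>M) = (\<integral>x. f x * F x - f x * G x \<partial>M)"
        unfolding Q_def F_def using iFf iGf by (simp add: F_def)
      also have "\<bar>\<dots>\<bar> \<le> (\<integral>x. \<bar>f x * F x - f x * G x\<bar> \<partial>M)"
        by (rule integral_abs_bound)
      also have "\<dots> \<le> (\<integral>x. \<bar>f x\<bar> * (e * m) \<partial>M)"
      proof (rule integral_mono)
        show "integrable M (\<lambda>x. \<bar>f x * F x - f x * G x\<bar>)" using iFf iGf by simp
        show "integrable M (\<lambda>x. \<bar>f x\<bar> * (e * m))" using f by simp
        fix x
        have "\<bar>f x * F x - f x * G x\<bar> = \<bar>f x\<bar> * \<bar>F x - G x\<bar>"
          by (simp add: abs_mult[symmetric] algebra_simps)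
        also have "\<dots> \<le> \<bar>f x\<bar> * (e * m)" by (rule mult_left_mono[OF FG]) simp
        finally show "\<bar>f x * F x - f x * G x\<bar> \<le> \<bar>f x\<bar> * (e * m)" .
      qed
      also have "\<dots> = e * m * m" unfolding m_def by simp
      finally show ?thesis .
    qed
    have fG: "(\<integral>x. f x * G x \<partial>M) = (\<Sum>i<n. \<Sum>k<n. w i * w k * K (xs i) (xs k))"
    proof -
      have "(\<integral>x. f x * G x \<partial>M)
          = (\<integral>x. (\<Sum>i<n. \<Sum>k<n. (K (xs i) (xs k) * w i) * (indicator (P k) x * f x)) \<partial>M)"
        unfolding G_def by (rule arg_cong[where f="integral\<^sup>L M"], rule ext, simp only: sum_distrib_left mult_ac)
      also have "\<dots> = (\<Sum>i<n. \<Sum>k<n. (K (xs i) (xs k) * w i) * w k)"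
        using iw unfolding w_def by (simp add: integral_sum)
      finally show ?thesis by (simp add: mult_ac)
    qed
    have pos: "0 \<le> (\<Sum>i<n. \<Sum>k<n. w i * w k * K (xs i) (xs k))"
    proof -
      have "0 \<le> (\<Sum>i<length (map xs [0..<n]). \<Sum>j<length (map xs [0..<n]).
          map w [0..<n] ! i * map w [0..<n] ! j * K (map xs [0..<n] ! i) (map xs [0..<n] ! j))"
      proof -
        have H: "\<forall>(xs :: 'a list) (c :: real list). length c = length xs \<longrightarrow>
          0 \<le> (\<Sum>i<length xs. \<Sum>j<length xs. c!i * c!j * K (xs!i) (xs!j))"
          using pd unfolding pos_def_kernel_def by blast
        show ?thesis using H[rule_format, of "map w [0..<n]" "map xs [0..<n]"] by simp
      qed
      also have "\<dots> = (\<Sum>i<n. \<Sum>k<n. w i * w k * K (xs i) (xs k))"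
        by (intro sum.cong) auto
      finally show ?thesis .
    qed
    show ?thesis using QG fG pos by (simp add: abs_le_iff)
  qed
  show ?thesis
  proof (rule ccontr)
    assume "\<not> 0 \<le> (\<integral>x. f x * int_op K M f x \<partial>M)"
    then have Qn: "Q < 0" unfolding Q_def by simp
    define e where "e = - Q / (2 * (m * m + 1))"
    have mm: "0 < m * m + 1" using mult_nonneg_nonneg[OF m0 m0] by linarith
    then have den: "0 < 2 * (m * m + 1)" by simp
    have e0: "e > 0" unfolding e_def by (intro divide_pos_pos) (use Qn den in auto)
    have "- e * (m * m) \<le> Q" by (rule main[OF e0])
    moreover have "- e * (m * m) > Q"
    proof -
      have "e * (m * m) \<le> e * (m * m + 1)" using e0 by simp
      also have "\<dots> = - Q / 2" unfolding e_def using den by (simp add: field_simps)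
      finally show ?thesis using Qn by linarith
    qed
    ultimately show False by simp
  qed
qed

end

context prob_space begin

lemma AE_summable_abs:
  fixes d :: "nat \<Rightarrow> 'a \<Rightarrow> real"
  assumes di: "\<And>k. integrable M (d k)" and sm: "summable (\<lambda>k. \<integral>x. \<bar>d k x\<bar> \<partial>M)"
  shows "AE x in M. summable (\<lambda>k. \<bar>d k x\<bar>)"
proof -
  have dm[measurable]: "d k \<in> borel_measurable M" for k using di by auto
  have "(\<integral>\<^sup>+x. (\<Sum>k. ennreal \<bar>d k x\<bar>) \<partial>M) = (\<Sum>k. \<integral>\<^sup>+x. ennreal \<bar>d k x\<bar> \<partial>M)"
    by (rule nn_integral_suminf) measurable
  also have "\<dots> = (\<Sum>k. ennreal (\<integral>x. \<bar>d k x\<bar> \<partial>M))"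
    by (intro arg_cong[where f=suminf] ext nn_integral_eq_integral integrable_abs di) auto
  also have "\<dots> = ennreal (\<Sum>k. \<integral>x. \<bar>d k x\<bar> \<partial>M)"
    by (rule suminf_ennreal2[OF _ sm]) simp
  finally have "(\<integral>\<^sup>+x. (\<Sum>k. ennreal \<bar>d k x\<bar>) \<partial>M) \<noteq> \<infinity>" by simp
  then have "AE x in M. (\<Sum>k. ennreal \<bar>d k x\<bar>) \<noteq> \<infinity>"
    by (intro nn_integral_noteq_infinite) measurable
  then show ?thesis
    by eventually_elim (rule summable_suminf_not_top, auto)
qed

lemma L1_limit:
  fixes d :: "nat \<Rightarrow> 'a \<Rightarrow> real"
  assumes di: "\<And>k. integrable M (d k)" and sm: "summable (\<lambda>k. \<integral>x. \<bar>d k x\<bar> \<partial>M)"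
  shows "integrable M (\<lambda>x. \<Sum>k. d k x)"
    "(\<lambda>K. \<integral>x. \<bar>(\<Sum>k. d k x) - (\<Sum>k<K. d k x)\<bar> \<partial>M) \<longlonglongrightarrow> 0"
proof -
  have dm[measurable]: "d k \<in> borel_measurable M" for k using di by auto
  have ae: "AE x in M. summable (\<lambda>k. \<bar>d k x\<bar>)" by (rule AE_summable_abs[OF di sm])
  show iS: "integrable M (\<lambda>x. \<Sum>k. d k x)"
    by (rule integrable_suminf[OF di]) (use ae sm in auto)
  have iD: "integrable M (\<lambda>x. \<Sum>k. \<bar>d k x\<bar>)"
    by (rule integrable_suminf) (use ae sm di in auto)
  have "(\<lambda>K. \<integral>x. \<bar>(\<Sum>k. d k x) - (\<Sum>k<K. d k x)\<bar> \<partial>M) \<longlonglongrightarrow> (\<integral>x. 0 \<partial>M)"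
  proof (rule integral_dominated_convergence[where w="\<lambda>x. 2 * (\<Sum>k. \<bar>d k x\<bar>)"])
    show "(\<lambda>x. 0::real) \<in> borel_measurable M" by simp
    show "(\<lambda>x. \<bar>(\<Sum>k. d k x) - (\<Sum>k<K. d k x)\<bar>) \<in> borel_measurable M" for K by measurable
    show "integrable M (\<lambda>x. 2 * (\<Sum>k. \<bar>d k x\<bar>))" using iD by simp
    show "AE x in M. (\<lambda>K. \<bar>(\<Sum>k. d k x) - (\<Sum>k<K. d k x)\<bar>) \<longlonglongrightarrow> 0"
      using ae
    proof eventually_elim
      fix x assume s: "summable (\<lambda>k. \<bar>d k x\<bar>)"
      then have "summable (\<lambda>k. d k x)" by (rule summable_rabs_cancel)
      then have "(\<lambda>K. \<Sum>k<K. d k x) \<longlonglongrightarrow> (\<Sum>k. d k x)" by (rule summable_LIMSEQ)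
      then have "(\<lambda>K. (\<Sum>k. d k x) - (\<Sum>k<K. d k x)) \<longlonglongrightarrow> (\<Sum>k. d k x) - (\<Sum>k. d k x)"
        by (intro tendsto_intros)
      then have "(\<lambda>K. \<bar>(\<Sum>k. d k x) - (\<Sum>k<K. d k x)\<bar>) \<longlonglongrightarrow> \<bar>(\<Sum>k. d k x) - (\<Sum>k. d k x)\<bar>"
        by (rule tendsto_rabs)
      then show "(\<lambda>K. \<bar>(\<Sum>k. d k x) - (\<Sum>k<K. d k x)\<bar>) \<longlonglongrightarrow> 0" by simp
    qed
    show "AE x in M. norm \<bar>(\<Sum>k. d k x) - (\<Sum>k<K. d k x)\<bar> \<le> 2 * (\<Sum>k. \<bar>d k x\<bar>)" for K
      using ae
    proof eventually_elim
      fix x assume s: "summable (\<lambda>k. \<bar>d k x\<bar>)"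
      have a: "\<bar>\<Sum>k. d k x\<bar> \<le> (\<Sum>k. \<bar>d k x\<bar>)"
        using summable_rabs[OF s] .
      have "\<bar>\<Sum>k<K. d k x\<bar> \<le> (\<Sum>k<K. \<bar>d k x\<bar>)" by (rule sum_abs)
      also have "\<dots> \<le> (\<Sum>k. \<bar>d k x\<bar>)" by (rule sum_le_suminf[OF s]) auto
      finally show "norm \<bar>(\<Sum>k. d k x) - (\<Sum>k<K. d k x)\<bar> \<le> 2 * (\<Sum>k. \<bar>d k x\<bar>)"
        using a by simp
    qed
  qed
  then show "(\<lambda>K. \<integral>x. \<bar>(\<Sum>k. d k x) - (\<Sum>k<K. d k x)\<bar> \<partial>M) \<longlonglongrightarrow> 0" by simp
qed

end

lemma sc1: fixes \<mu> t s :: real assumes mu: "0 \<le> \<mu>" and t: "0 < t" and s: "0 < s" "s \<le> 1"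
  shows "\<mu> powr s * t / (\<mu> + t) \<le> t powr s"
proof (cases "\<mu> \<le> t")
  case True
  have "\<mu> powr s * t / (\<mu> + t) \<le> \<mu> powr s"
    using mu t by (simp add: divide_le_eq mult_left_mono)
  also have "\<dots> \<le> t powr s" using True mu s by (intro powr_mono2) auto
  finally show ?thesis .
next
  case False
  then have mt: "t < \<mu>" by simp
  then have mp: "0 < \<mu>" using t by simp
  have "\<mu> powr s * t / (\<mu> + t) \<le> \<mu> powr s * t / \<mu>"
    using mp t by (intro divide_left_mono) auto
  also have "\<dots> = \<mu> powr (s - 1) * t" using mp by (simp add: powr_diff)
  also have "\<dots> \<le> t powr (s - 1) * t"
    using powr_mono2'[of "s - 1" t \<mu>] s t mt by (intro mult_right_mono) auto
  also have "\<dots> = t powr s" using t by (simp add: powr_diff)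
  finally show ?thesis .
qed

lemma sc2: fixes \<mu> t s :: real assumes mu: "0 \<le> \<mu>" and t: "0 < t" and s: "0 < s" "s \<le> 1"
  shows "\<mu> powr s / (\<mu> + t) \<le> t powr (s - 1)"
proof (cases "\<mu> \<le> t")
  case True
  have "\<mu> powr s / (\<mu> + t) \<le> \<mu> powr s / t"
    using mu t by (intro divide_left_mono) auto
  also have "\<dots> \<le> t powr s / t" using True mu s t by (intro divide_right_mono powr_mono2) auto
  also have "\<dots> = t powr (s - 1)" using t by (simp add: powr_diff)
  finally show ?thesis .
next
  case False
  then have mt: "t < \<mu>" by simp
  then have mp: "0 < \<mu>" using t by simp
  have "\<mu> powr s / (\<mu> + t) \<le> \<mu> powr s / \<mu>"
    using mp t by (intro divide_left_mono) auto
  also have "\<dots> = \<mu> powr (s - 1)" using mp by (simp add: powr_diff)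
  also have "\<dots> \<le> t powr (s - 1)"
    using powr_mono2'[of "s - 1" t \<mu>] s t mt by auto
  finally show ?thesis .
qed

locale full = Rs: rset R fr + N: konb "marginal R" K \<phi>
  for R :: "('a::metric_space \<times> real) measure" and fr K \<phi> +
  fixes lam :: "nat \<Rightarrow> real" and h :: "'a \<Rightarrow> real"
  assumes pd: "pos_def_kernel K"
    and eig: "\<And>j. AE x in marginal R. int_op K (marginal R) (\<phi> j) x = lam j * \<phi> j x"
    and lam_dec: "\<And>j. lam (Suc j) \<le> lam j"
    and hsq: "sq_int (marginal R) h"
begin

abbreviation "nu \<equiv> marginal R"

lemma lam_nonneg: "0 \<le> lam j"
proof -
  have "0 \<le> (\<integral>x. \<phi> j x * int_op K nu (\<phi> j) x \<partial>nu)" by (rule N.pd_quad[OF pd N.phi_int])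
  also have "\<dots> = (\<integral>x. \<phi> j x * (lam j * \<phi> j x) \<partial>nu)"
  proof (rule integral_cong_AE)
    show "(\<lambda>x. \<phi> j x * int_op K nu (\<phi> j) x) \<in> borel_measurable nu"
      using N.int_op_meas[OF N.phi_int] N.phi_meas by measurable
    show "(\<lambda>x. \<phi> j x * (lam j * \<phi> j x)) \<in> borel_measurable nu" using N.phi_meas by measurable
    show "AE x in nu. \<phi> j x * int_op K nu (\<phi> j) x = \<phi> j x * (lam j * \<phi> j x)"
      using eig[of j] by eventually_elim simp
  qed
  also have "\<dots> = lam j * (\<integral>x. \<phi> j x * \<phi> j x \<partial>nu)" by (simp add: mult_ac)
  also have "\<dots> = lam j" by (simp add: N.phi_orth)
  finally show ?thesis .
qed

lemma lam_le0: "lam j \<le> lam 0"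
proof (induction j)
  case (Suc j) then show ?case using lam_dec[of j] by linarith
qed simp

lemma op_comb: "AE x in nu. int_op K nu (\<lambda>t. \<Sum>j<n. c j * \<phi> j t) x = (\<Sum>j<n. c j * lam j * \<phi> j x)"
proof -
  have "AE x in nu. \<forall>j\<in>{..<n}. int_op K nu (\<phi> j) x = lam j * \<phi> j x"
    by (rule AE_finite_allI) (auto intro: eig)
  then show ?thesis
  proof eventually_elim
    case (elim x)
    have "int_op K nu (\<lambda>t. \<Sum>j<n. c j * \<phi> j t) x = (\<Sum>j<n. c j * int_op K nu (\<phi> j) x)"
      by (rule N.int_op_sum[OF N.phi_int])
    also have "\<dots> = (\<Sum>j<n. c j * lam j * \<phi> j x)"
      using elim by (intro sum.cong) auto
    finally show ?case .
  qed
qed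

end

lemma sq_sum_le: "(a + b)^2 \<le> 2 * a^2 + 2 * (b::real)^2"
proof -
  have "0 \<le> (a - b)^2" by simp
  then show ?thesis by (simp add: power2_eq_square algebra_simps)
qed

context full begin

lemma e_lim:
  assumes fexp: "(\<lambda>n. L2_norm_m nu (\<lambda>x. fr x - S n x)) \<longlonglongrightarrow> 0"
  shows "(\<lambda>n. \<integral>x. (fr x - S n x)^2 \<partial>nu) \<longlonglongrightarrow> 0"
proof -
  have "(\<lambda>n. (L2_norm_m nu (\<lambda>x. fr x - S n x))^2) \<longlonglongrightarrow> 0^2"
    by (intro tendsto_intros fexp)
  moreover have "(L2_norm_m nu (\<lambda>x. fr x - S n x))^2 = (\<integral>x. (fr x - S n x)^2 \<partial>nu)" for n
    unfolding L2_norm_m_def by simp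
  ultimately show ?thesis by simp
qed

lemma case_ge1:
  assumes s1: "1 \<le> s" and lamb: "0 < lamb"
    and fexp: "(\<lambda>n. L2_norm_m nu
          (\<lambda>x. fr x - (\<Sum>j<n. lam j powr s * (\<integral>t. h t * \<phi> j t \<partial>nu) * \<phi> j x))) \<longlonglongrightarrow> 0"
  shows "\<exists>\<mu>1 \<mu>2. finite_borel \<mu>1 \<and> finite_borel \<mu>2 \<and>
              (AE x in nu. fr x = f_meas K \<mu>1 \<mu>2 x) \<and>
              ls_error R (f_meas K \<mu>1 \<mu>2) - ls_error R fr + lamb * tot_var \<mu>1 \<mu>2
                \<le> lam 0 powr (s - 1) * L2_norm_m nu h * lamb"
proof -
  define a where "a j = (\<integral>t. h t * \<phi> j t \<partial>nu)" for j
  define H where "H = (\<integral>x. (h x)^2 \<partial>nu)"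
  have H0: "0 \<le> H" unfolding H_def by simp
  define L where "L = lam 0 powr (s - 1)"
  have L0: "0 \<le> L" unfolding L_def by simp
  define c where "c j = lam j powr (s - 1) * a j" for j
  define G where "G n x = (\<Sum>j<n. c j * \<phi> j x)" for n x
  define S where "S n x = (\<Sum>j<n. lam j powr s * a j * \<phi> j x)" for n x
  define e where "e n = (\<integral>x. (fr x - S n x)^2 \<partial>nu)" for n
  have elim: "e \<longlonglongrightarrow> 0"
    unfolding e_def S_def a_def by (rule e_lim[OF fexp])
  have cl: "c j * lam j = lam j powr s * a j" for j
  proof (cases "lam j = 0")
    case True then show ?thesis unfolding c_def using s1 by simp
  next
    case False
    then have lp: "0 < lam j" using lam_nonneg[of j] by simp
    have "lam j powr (s - 1) * lam j = lam j powr s"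
      using lp by (simp add: powr_diff)
    then show ?thesis unfolding c_def by (simp add: mult_ac)
  qed
  have Gm[measurable]: "G n \<in> borel_measurable nu" for n
    unfolding G_def using N.phi_meas by measurable
  have Gsq: "sq_int nu (G n)" for n unfolding G_def by (rule N.comb_sq)
  have Gi: "integrable nu (G n)" for n using Gsq N.sq_int_integrable by blast
  have Ssq: "sq_int nu (S n)" for n unfolding S_def by (rule N.comb_sq)
  have Gop: "AE x in nu. int_op K nu (G n) x = S n x" for n
    using op_comb[where n=n and c=c] unfolding G_def S_def by eventually_elim (simp add: cl)
  have c2: "(c j)^2 \<le> L^2 * (a j)^2" for j
  proof -
    have "lam j powr (s - 1) \<le> L" unfolding L_def
      using s1 lam_nonneg[of j] lam_le0[of j] by (intro powr_mono2) auto
    then have "\<bar>c j\<bar> \<le> L * \<bar>a j\<bar>" unfolding c_def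
      by (simp add: abs_mult mult_right_mono)
    then have "\<bar>c j\<bar>^2 \<le> (L * \<bar>a j\<bar>)^2" by (intro power_mono) auto
    then show ?thesis by (simp add: power_mult_distrib)
  qed
  have Pb: "(\<Sum>j<n. (c j)^2) \<le> L^2 * H" for n
  proof -
    have "(\<Sum>j<n. (c j)^2) \<le> (\<Sum>j<n. L^2 * (a j)^2)" by (intro sum_mono c2)
    also have "\<dots> = L^2 * (\<Sum>j<n. (a j)^2)" by (simp add: sum_distrib_left)
    also have "\<dots> \<le> L^2 * H" unfolding H_def a_def
      by (intro mult_left_mono N.bessel[OF hsq]) auto
    finally show ?thesis .
  qed
  have GG: "(\<integral>x. (G n x)^2 \<partial>nu) = (\<Sum>j<n. (c j)^2)" for n
    unfolding G_def power2_eq_square by (rule N.orth_sum)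
  have smc: "summable (\<lambda>j. (c j)^2)"
    by (rule summableI_nonneg_bounded[where x="L^2 * H"]) (use Pb in auto)
  define T where "T = (\<Sum>j. (c j)^2)"
  define P where "P n = (\<Sum>j<n. (c j)^2)" for n
  have PT: "P \<longlonglongrightarrow> T" unfolding P_def T_def by (rule summable_LIMSEQ[OF smc])
  have PleT: "P n \<le> T" for n unfolding P_def T_def by (rule sum_le_suminf[OF smc]) auto
  have Pmono: "P n \<le> P m" if "n \<le> m" for n m
    unfolding P_def using that by (intro sum_mono2) auto
  have diff: "(\<integral>x. (G m x - G n x)^2 \<partial>nu) \<le> T - P n" if nm: "n \<le> m" for n m
  proof -
    define dd where "dd j = (if j < n then 0 else c j)" for j
    have split: "{..<m} = {..<n} \<union> {n..<m}" using nm by auto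
    have "G m x - G n x = (\<Sum>j<m. dd j * \<phi> j x)" for x
    proof -
      have "G m x = (\<Sum>j<n. c j * \<phi> j x) + (\<Sum>j\<in>{n..<m}. c j * \<phi> j x)"
        unfolding G_def split by (rule sum.union_disjoint) auto
      moreover have "(\<Sum>j<m. dd j * \<phi> j x) = (\<Sum>j<n. dd j * \<phi> j x) + (\<Sum>j\<in>{n..<m}. dd j * \<phi> j x)"
        unfolding split by (rule sum.union_disjoint) auto
      moreover have "(\<Sum>j<n. dd j * \<phi> j x) = 0" unfolding dd_def by simp
      moreover have "(\<Sum>j\<in>{n..<m}. dd j * \<phi> j x) = (\<Sum>j\<in>{n..<m}. c j * \<phi> j x)"
        unfolding dd_def by (intro sum.cong) auto
      ultimately show ?thesis unfolding G_def by simp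
    qed
    then have "(\<integral>x. (G m x - G n x)^2 \<partial>nu) = (\<integral>x. (\<Sum>j<m. dd j * \<phi> j x) * (\<Sum>j<m. dd j * \<phi> j x) \<partial>nu)"
      by (simp add: power2_eq_square)
    also have "\<dots> = (\<Sum>j<m. dd j * dd j)" by (rule N.orth_sum)
    also have "\<dots> = (\<Sum>j<n. dd j * dd j) + (\<Sum>j\<in>{n..<m}. dd j * dd j)"
      unfolding split by (rule sum.union_disjoint) auto
    also have "\<dots> = (\<Sum>j\<in>{n..<m}. (c j)^2)"
      unfolding dd_def by (simp add: power2_eq_square)
    also have "\<dots> = P m - P n"
    proof -
      have "P m = P n + (\<Sum>j\<in>{n..<m}. (c j)^2)"
        unfolding P_def split by (rule sum.union_disjoint) auto
      then show ?thesis by simp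
    qed
    also have "\<dots> \<le> T - P n" using PleT[of m] by simp
    finally show ?thesis .
  qed
  have Rlim: "(\<lambda>n. T - P n) \<longlonglongrightarrow> 0"
    using tendsto_diff[OF tendsto_const[of T] PT] by simp
  have "\<forall>k. \<exists>n0. \<forall>n\<ge>n0. T - P n < (1/4)^k"
  proof
    fix k :: nat
    have "eventually (\<lambda>n. dist (T - P n) 0 < (1/4)^k) sequentially"
      using Rlim by (rule tendstoD) simp
    then obtain n0 where "\<And>n. n \<ge> n0 \<Longrightarrow> dist (T - P n) 0 < (1/4)^k"
      unfolding eventually_sequentially by blast
    then have "\<forall>n\<ge>n0. T - P n < (1/4)^k" by (auto simp: dist_real_def abs_less_iff)
    then show "\<exists>n0. \<forall>n\<ge>n0. T - P n < (1/4)^k" by blast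
  qed
  then obtain N0 where N0: "\<And>k n. n \<ge> N0 k \<Longrightarrow> T - P n < (1/4)^k" by metis
  define Nn where "Nn k = (\<Sum>i\<le>k. N0 i) + k" for k
  have Nsm: "strict_mono Nn"
    unfolding strict_mono_Suc_iff Nn_def by simp
  have NN0: "N0 k \<le> Nn k" for k
    unfolding Nn_def using member_le_sum[of k "{..k}" N0] by simp
  define d where "d k x = G (Nn (Suc k)) x - G (Nn k) x" for k x
  have dsq: "sq_int nu (d k)" for k unfolding d_def by (intro N.sq_int_diff Gsq)
  have di: "integrable nu (d k)" for k using dsq N.sq_int_integrable by blast
  have d2: "(\<integral>x. (d k x)^2 \<partial>nu) \<le> (1/4)^k" for k
  proof -
    have "Nn k \<le> Nn (Suc k)" using Nsm by (simp add: strict_mono_less_eq)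
    then have "(\<integral>x. (d k x)^2 \<partial>nu) \<le> T - P (Nn k)" unfolding d_def by (rule diff)
    also have "\<dots> < (1/4)^k" by (rule N0[OF NN0])
    finally show ?thesis by simp
  qed
  have d1: "(\<integral>x. \<bar>d k x\<bar> \<partial>nu) \<le> (1/2)^k" for k
  proof -
    have "(\<integral>x. \<bar>d k x\<bar> \<partial>nu) \<le> sqrt (\<integral>x. (d k x)^2 \<partial>nu)" by (rule N.L1L2[OF dsq])
    also have "\<dots> \<le> sqrt ((1/4)^k)" using d2[of k] by simp
    also have "\<dots> = (1/2)^k" by (simp add: real_sqrt_power real_sqrt_divide)
    finally show ?thesis .
  qed
  have sm: "summable (\<lambda>k. \<integral>x. \<bar>d k x\<bar> \<partial>nu)"
    by (rule summable_comparison_test[OF _ summable_geometric[of "1/2"]]) (use d1 in auto)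
  note LL = N.L1_limit[OF di sm]
  define g where "g x = G (Nn 0) x + (\<Sum>k. d k x)" for x
  have gi: "integrable nu g" unfolding g_def using LL(1) Gi by simp
  have gm[measurable]: "g \<in> borel_measurable nu" using gi by auto
  have tele: "(\<Sum>k<K. d k x) = G (Nn K) x - G (Nn 0) x" for K x
    unfolding d_def by (rule sum_lessThan_telescope)
  define r where "r K = (\<integral>x. \<bar>g x - G (Nn K) x\<bar> \<partial>nu)" for K
  have rlim: "r \<longlonglongrightarrow> 0"
  proof -
    have "r = (\<lambda>K. \<integral>x. \<bar>(\<Sum>k. d k x) - (\<Sum>k<K. d k x)\<bar> \<partial>nu)"
      unfolding r_def g_def tele by (intro ext) (simp add: algebra_simps)
    then show ?thesis using LL(2) by simp
  qed
  have r0: "0 \<le> r K" for K unfolding r_def by simp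
  have GL1: "(\<integral>x. \<bar>G n x\<bar> \<partial>nu) \<le> L * sqrt H" for n
  proof -
    have "(\<integral>x. \<bar>G n x\<bar> \<partial>nu) \<le> sqrt (\<integral>x. (G n x)^2 \<partial>nu)" by (rule N.L1L2[OF Gsq])
    also have "\<dots> \<le> sqrt (L^2 * H)" unfolding GG using Pb[of n] by simp
    also have "\<dots> = L * sqrt H" using L0 by (simp add: real_sqrt_mult)
    finally show ?thesis .
  qed
  have gL1: "(\<integral>x. \<bar>g x\<bar> \<partial>nu) \<le> L * sqrt H"
  proof (rule LIMSEQ_le_const[where X="\<lambda>q. r q + L * sqrt H"])
    show "(\<lambda>q. r q + L * sqrt H) \<longlonglongrightarrow> L * sqrt H"
      using tendsto_add[OF rlim tendsto_const[of "L * sqrt H"]] by simp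
    show "\<exists>N. \<forall>n\<ge>N. (\<integral>x. \<bar>g x\<bar> \<partial>nu) \<le> r n + L * sqrt H"
    proof (intro exI allI impI)
      fix q :: nat
      have "(\<integral>x. \<bar>g x\<bar> \<partial>nu) \<le> (\<integral>x. \<bar>g x - G (Nn q) x\<bar> + \<bar>G (Nn q) x\<bar> \<partial>nu)"
        using gi Gi by (intro integral_mono) auto
      also have "\<dots> = r q + (\<integral>x. \<bar>G (Nn q) x\<bar> \<partial>nu)" unfolding r_def using gi Gi by simp
      also have "\<dots> \<le> r q + L * sqrt H" using GL1 by simp
      finally show "(\<integral>x. \<bar>g x\<bar> \<partial>nu) \<le> r q + L * sqrt H" .
    qed
  qed
  define Fg where "Fg = int_op K nu g"
  have Fgm[measurable]: "Fg \<in> borel_measurable nu" unfolding Fg_def by (rule N.int_op_meas[OF gi])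
  have Fgb: "\<bar>Fg x\<bar> \<le> N.KB * (\<integral>x. \<bar>g x\<bar> \<partial>nu)" for x unfolding Fg_def by (rule N.int_op_bound[OF gi])
  have Fgsq: "sq_int nu Fg" by (rule N.sq_int_bounded[OF Fgm Fgb])
  have frsq: "sq_int nu fr" by (rule Rs.fr_sq)
  have Q0: "(\<integral>x. (Fg x - fr x)^2 \<partial>nu) \<le> 0"
  proof (rule LIMSEQ_le_const[where X="\<lambda>q. 2 * (N.KB * r q)^2 + 2 * e (Nn q)"])
    have "(e \<circ> Nn) \<longlonglongrightarrow> 0" by (rule LIMSEQ_subseq_LIMSEQ[OF elim Nsm])
    then have "(\<lambda>q. e (Nn q)) \<longlonglongrightarrow> 0" by (simp add: o_def)
    then have "(\<lambda>q. 2 * (N.KB * r q)^2 + 2 * e (Nn q)) \<longlonglongrightarrow> 2 * (N.KB * 0)^2 + 2 * 0"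
      by (intro tendsto_intros rlim)
    then show "(\<lambda>q. 2 * (N.KB * r q)^2 + 2 * e (Nn q)) \<longlonglongrightarrow> 0" by simp
    show "\<exists>N. \<forall>n\<ge>N. (\<integral>x. (Fg x - fr x)^2 \<partial>nu) \<le> 2 * (N.KB * r n)^2 + 2 * e (Nn n)"
    proof (intro exI allI impI)
      fix q :: nat
      have b1: "\<bar>Fg x - int_op K nu (G (Nn q)) x\<bar> \<le> N.KB * r q" for x
      proof -
        have "Fg x - int_op K nu (G (Nn q)) x = int_op K nu (\<lambda>t. g t - G (Nn q) t) x"
          unfolding Fg_def by (rule N.int_op_diff[OF gi Gi])
        also have "\<bar>\<dots>\<bar> \<le> N.KB * r q" unfolding r_def
          by (rule N.int_op_bound) (use gi Gi in simp)
        finally show ?thesis .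
      qed
      have Gopm: "int_op K nu (G (Nn q)) \<in> borel_measurable nu" by (rule N.int_op_meas[OF Gi])
      have "(\<integral>x. (Fg x - fr x)^2 \<partial>nu)
          \<le> (\<integral>x. 2 * (Fg x - int_op K nu (G (Nn q)) x)^2 + 2 * (fr x - S (Nn q) x)^2 \<partial>nu)"
      proof (rule integral_mono_AE)
        have A: "sq_int nu (\<lambda>x. Fg x - fr x)" by (rule N.sq_int_diff[OF Fgsq frsq])
        show "integrable nu (\<lambda>x. (Fg x - fr x)^2)" using A unfolding sq_int_def by auto
        have B: "sq_int nu (\<lambda>x. Fg x - int_op K nu (G (Nn q)) x)"
          by (rule N.sq_int_bounded[where C="N.KB * r q"]) (use Gopm b1 in auto)
        have C: "sq_int nu (\<lambda>x. fr x - S (Nn q) x)" by (rule N.sq_int_diff[OF frsq Ssq])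
        show "integrable nu (\<lambda>x. 2 * (Fg x - int_op K nu (G (Nn q)) x)^2 + 2 * (fr x - S (Nn q) x)^2)"
          using B C unfolding sq_int_def by auto
        show "AE x in nu. (Fg x - fr x)^2 \<le> 2 * (Fg x - int_op K nu (G (Nn q)) x)^2 + 2 * (fr x - S (Nn q) x)^2"
          using Gop[of "Nn q"]
        proof eventually_elim
          case (elim x)
          have "Fg x - fr x = (Fg x - int_op K nu (G (Nn q)) x) + (S (Nn q) x - fr x)"
            using elim by simp
          then have "(Fg x - fr x)^2 \<le> 2 * (Fg x - int_op K nu (G (Nn q)) x)^2 + 2 * (S (Nn q) x - fr x)^2"
            using sq_sum_le by metis
          also have "(S (Nn q) x - fr x)^2 = (fr x - S (Nn q) x)^2" by (simp add: power2_commute)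
          finally show ?case .
        qed
      qed
      also have "\<dots> = 2 * (\<integral>x. (Fg x - int_op K nu (G (Nn q)) x)^2 \<partial>nu) + 2 * e (Nn q)"
      proof -
        have B: "sq_int nu (\<lambda>x. Fg x - int_op K nu (G (Nn q)) x)"
          by (rule N.sq_int_bounded[where C="N.KB * r q"]) (use Gopm b1 in auto)
        have C: "sq_int nu (\<lambda>x. fr x - S (Nn q) x)" by (rule N.sq_int_diff[OF frsq Ssq])
        show ?thesis using B C unfolding sq_int_def e_def by simp
      qed
      also have "(\<integral>x. (Fg x - int_op K nu (G (Nn q)) x)^2 \<partial>nu) \<le> (\<integral>x. (N.KB * r q)^2 \<partial>nu)"
      proof (rule integral_mono)
        have B: "sq_int nu (\<lambda>x. Fg x - int_op K nu (G (Nn q)) x)"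
          by (rule N.sq_int_bounded[where C="N.KB * r q"]) (use Gopm b1 in auto)
        then show "integrable nu (\<lambda>x. (Fg x - int_op K nu (G (Nn q)) x)^2)" unfolding sq_int_def by auto
        show "integrable nu (\<lambda>x. (N.KB * r q)^2)" by simp
        fix x
        have "\<bar>Fg x - int_op K nu (G (Nn q)) x\<bar>^2 \<le> (N.KB * r q)^2"
          by (rule power_mono[OF b1]) simp
        then show "(Fg x - int_op K nu (G (Nn q)) x)^2 \<le> (N.KB * r q)^2" by simp
      qed
      also have "(\<integral>x. (N.KB * r q)^2 \<partial>nu) = (N.KB * r q)^2" using N.prob_space by simp
      finally show "(\<integral>x. (Fg x - fr x)^2 \<partial>nu) \<le> 2 * (N.KB * r q)^2 + 2 * e (Nn q)" by simp
    qed
  qed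
  have Qeq: "(\<integral>x. (Fg x - fr x)^2 \<partial>nu) = 0"
    using Q0 by (simp add: antisym)
  have AEeq: "AE x in nu. fr x = Fg x"
  proof -
    have A: "sq_int nu (\<lambda>x. Fg x - fr x)" by (rule N.sq_int_diff[OF Fgsq frsq])
    have "AE x in nu. (Fg x - fr x)^2 = 0"
      using integral_nonneg_eq_0_iff_AE[of nu "\<lambda>x. (Fg x - fr x)^2"] A Qeq
      unfolding sq_int_def by simp
    then show ?thesis by eventually_elim simp
  qed
  define \<mu>1 where "\<mu>1 = density nu (\<lambda>x. ennreal (N.gp g x))"
  define \<mu>2 where "\<mu>2 = density nu (\<lambda>x. ennreal (N.gn g x))"
  note DM = N.dens_meas[OF gi]
  have fm: "f_meas K \<mu>1 \<mu>2 = Fg" unfolding \<mu>1_def \<mu>2_def Fg_def using DM(3) by (intro ext) simp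
  have Fgb': "Fg \<in> borel_measurable borel" using Fgm N.meas_iff by blast
  have ls: "ls_error R (f_meas K \<mu>1 \<mu>2) - ls_error R fr = 0"
    unfolding fm using Rs.decomp[OF Fgb' Fgsq] Qeq by simp
  have tv: "tot_var \<mu>1 \<mu>2 \<le> L * sqrt H"
    using DM(4) gL1 unfolding \<mu>1_def \<mu>2_def by linarith
  show ?thesis
  proof (intro exI conjI)
    show "finite_borel \<mu>1" unfolding \<mu>1_def by (rule DM(1))
    show "finite_borel \<mu>2" unfolding \<mu>2_def by (rule DM(2))
    show "AE x in nu. fr x = f_meas K \<mu>1 \<mu>2 x" using AEeq unfolding fm .
    have "ls_error R (f_meas K \<mu>1 \<mu>2) - ls_error R fr + lamb * tot_var \<mu>1 \<mu>2 = lamb * tot_var \<mu>1 \<mu>2"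
      using ls by simp
    also have "\<dots> \<le> lamb * (L * sqrt H)" using tv lamb by (simp add: mult_left_mono)
    also have "\<dots> = lam 0 powr (s - 1) * L2_norm_m nu h * lamb"
      unfolding L_def H_def L2_norm_m_def by simp
    finally show "ls_error R (f_meas K \<mu>1 \<mu>2) - ls_error R fr + lamb * tot_var \<mu>1 \<mu>2
        \<le> lam 0 powr (s - 1) * L2_norm_m nu h * lamb" .
  qed
qed

end

lemma sq_eta: fixes u v \<eta> :: real assumes eta: "0 < \<eta>"
  shows "(u - v)^2 \<le> (1 + \<eta>) * u^2 + (1 + 1/\<eta>) * v^2"
proof -
  have a: "0 \<le> (\<eta> * u + v)^2 / \<eta>" using eta by simp
  have b: "(\<eta> * u + v)^2 / \<eta> = \<eta> * u^2 + 2 * u * v + v^2 / \<eta>"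
    using eta by (simp add: field_simps power2_eq_square)
  have c: "(u - v)^2 = u^2 - 2 * u * v + v^2" by (simp add: power2_diff)
  have d: "(1 + \<eta>) * u^2 + (1 + 1/\<eta>) * v^2 = u^2 + v^2 + (\<eta> * u^2 + v^2 / \<eta>)"
    by (simp add: algebra_simps)
  show ?thesis using a b c d by linarith
qed

context full begin

lemma case_lt1:
  assumes s: "0 < s" "s < 1" and lamb: "0 < lamb"
    and fexp: "(\<lambda>n. L2_norm_m nu
          (\<lambda>x. fr x - (\<Sum>j<n. lam j powr s * (\<integral>t. h t * \<phi> j t \<partial>nu) * \<phi> j x))) \<longlonglongrightarrow> 0"
  shows "Inf {ls_error R (f_meas K \<mu>1 \<mu>2) - ls_error R fr + lamb * tot_var \<mu>1 \<mu>2 | \<mu>1 \<mu>2.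
                  finite_borel \<mu>1 \<and> finite_borel \<mu>2}
           \<le> (L2_norm_m nu h + (L2_norm_m nu h)^2) * lamb powr (2 * s / (1 + s))"
proof -
  define Set where "Set = {ls_error R (f_meas K \<mu>1 \<mu>2) - ls_error R fr + lamb * tot_var \<mu>1 \<mu>2 | \<mu>1 \<mu>2.
                  finite_borel \<mu>1 \<and> finite_borel \<mu>2}"
  define a where "a j = (\<integral>t. h t * \<phi> j t \<partial>nu)" for j
  define H where "H = (\<integral>x. (h x)^2 \<partial>nu)"
  have H0: "0 \<le> H" unfolding H_def by simp
  define S where "S n x = (\<Sum>j<n. lam j powr s * a j * \<phi> j x)" for n x
  define e where "e n = (\<integral>x. (fr x - S n x)^2 \<partial>nu)" for n
  have elim: "e \<longlonglongrightarrow> 0"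
    unfolding e_def S_def a_def by (rule e_lim[OF fexp])
  have e0: "0 \<le> e n" for n unfolding e_def by simp
  define t where "t = lamb powr (1 / (1 + s))"
  have t0: "0 < t" unfolding t_def using lamb by simp
  have tt: "t powr (1 + s) = lamb" unfolding t_def using lamb s by (simp add: powr_powr)
  have tw: "lamb powr (2 * s / (1 + s)) = t powr (2 * s)"
    unfolding t_def using lamb s by (simp add: powr_powr)
  have lt: "lamb * t powr (s - 1) = t powr (2 * s)"
  proof -
    have "lamb * t powr (s - 1) = t powr (1 + s) * t powr (s - 1)" using tt by simp
    also have "\<dots> = t powr ((1 + s) + (s - 1))" by (rule powr_add[symmetric])
    also have "\<dots> = t powr (2 * s)" by (rule arg_cong[where f="\<lambda>z. t powr z"]) simp
    finally show ?thesis .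
  qed
  define T2 where "T2 = t powr (2 * s)"
  have T20: "0 \<le> T2" unfolding T2_def by simp
  define c where "c j = lam j powr s * a j / (lam j + t)" for j
  define dd where "dd j = lam j powr s * a j - c j * lam j" for j
  have lpt: "0 < lam j + t" for j using lam_nonneg[of j] t0 by simp
  have dd_eq: "dd j = a j * (lam j powr s * t / (lam j + t))" for j
    unfolding dd_def c_def using lpt[of j] by (simp add: field_simps)
  have dd2: "(dd j)^2 \<le> T2 * (a j)^2" for j
  proof -
    have "\<bar>dd j\<bar> = \<bar>a j\<bar> * (lam j powr s * t / (lam j + t))"
      unfolding dd_eq using lpt[of j] t0 by (simp add: abs_mult)
    also have "\<dots> \<le> \<bar>a j\<bar> * t powr s"
      using sc1[OF lam_nonneg t0 s(1)] s by (intro mult_left_mono) auto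
    finally have "\<bar>dd j\<bar>^2 \<le> (\<bar>a j\<bar> * t powr s)^2" by (intro power_mono) auto
    also have "\<dots> = (t powr s)^2 * (a j)^2" by (simp add: power_mult_distrib)
    also have "(t powr s)^2 = T2" unfolding T2_def using t0
      by (simp add: power2_eq_square powr_add[symmetric])
    finally show ?thesis by simp
  qed
  have c2: "(c j)^2 \<le> (t powr (s - 1))^2 * (a j)^2" for j
  proof -
    have "\<bar>c j\<bar> = \<bar>a j\<bar> * (lam j powr s / (lam j + t))"
      unfolding c_def using lpt[of j] by (simp add: abs_mult)
    also have "\<dots> \<le> \<bar>a j\<bar> * t powr (s - 1)"
      using sc2[OF lam_nonneg t0 s(1)] s by (intro mult_left_mono) auto
    finally have "\<bar>c j\<bar>^2 \<le> (\<bar>a j\<bar> * t powr (s - 1))^2" by (intro power_mono) auto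
    then show ?thesis by (simp add: power_mult_distrib mult.commute)
  qed
  have bes: "(\<Sum>j<n. (a j)^2) \<le> H" for n unfolding a_def H_def by (rule N.bessel[OF hsq])
  have frsq: "sq_int nu fr" by (rule Rs.fr_sq)
  have bdd: "bdd_below Set"
  proof (rule bdd_belowI[where m="- ls_error R fr"])
    fix v assume "v \<in> Set"
    then obtain \<mu>1 \<mu>2 where v: "v = ls_error R (f_meas K \<mu>1 \<mu>2) - ls_error R fr + lamb * tot_var \<mu>1 \<mu>2"
      and f: "finite_borel \<mu>1" "finite_borel \<mu>2" unfolding Set_def by blast
    have "0 \<le> ls_error R (f_meas K \<mu>1 \<mu>2)" unfolding ls_error_def by simp
    moreover have "0 \<le> lamb * tot_var \<mu>1 \<mu>2" using tv_bounds(1)[OF f] lamb by simp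
    ultimately show "- ls_error R fr \<le> v" unfolding v by linarith
  qed
  have keyn: "Inf Set \<le> (1 + \<eta>) * e n + (1 + 1/\<eta>) * (T2 * H) + T2 * sqrt H" if eta: "0 < \<eta>" for \<eta> n
  proof -
    define G where "G x = (\<Sum>j<n. c j * \<phi> j x)" for x
    have Gsq: "sq_int nu G" unfolding G_def by (rule N.comb_sq)
    have Gi: "integrable nu G" using Gsq N.sq_int_integrable by blast
    define F where "F = int_op K nu G"
    have Fm[measurable]: "F \<in> borel_measurable nu" unfolding F_def by (rule N.int_op_meas[OF Gi])
    have Fb: "\<bar>F x\<bar> \<le> N.KB * (\<integral>x. \<bar>G x\<bar> \<partial>nu)" for x unfolding F_def by (rule N.int_op_bound[OF Gi])
    have Fsq: "sq_int nu F" by (rule N.sq_int_bounded[OF Fm Fb])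
    have Fop: "AE x in nu. F x = (\<Sum>j<n. c j * lam j * \<phi> j x)"
      unfolding F_def G_def by (rule op_comb)
    have Ssq: "sq_int nu (S n)" unfolding S_def by (rule N.comb_sq)
    define V where "V x = (\<Sum>j<n. dd j * \<phi> j x)" for x
    have Vsq: "sq_int nu V" unfolding V_def by (rule N.comb_sq)
    have SFV: "AE x in nu. S n x - F x = V x"
      using Fop
    proof eventually_elim
      case (elim x)
      show ?case unfolding elim S_def V_def dd_def
        by (simp add: sum_subtractf[symmetric] left_diff_distrib)
    qed
    have VV: "(\<integral>x. (V x)^2 \<partial>nu) \<le> T2 * H"
    proof -
      have "(\<integral>x. (V x)^2 \<partial>nu) = (\<Sum>j<n. dd j * dd j)"
        unfolding V_def power2_eq_square by (rule N.orth_sum)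
      also have "\<dots> \<le> (\<Sum>j<n. T2 * (a j)^2)"
        by (intro sum_mono) (use dd2 in \<open>simp add: power2_eq_square\<close>)
      also have "\<dots> = T2 * (\<Sum>j<n. (a j)^2)" by (simp add: sum_distrib_left)
      also have "\<dots> \<le> T2 * H" by (intro mult_left_mono bes T20)
      finally show ?thesis .
    qed
    have err: "(\<integral>x. (F x - fr x)^2 \<partial>nu) \<le> (1 + \<eta>) * e n + (1 + 1/\<eta>) * (T2 * H)"
    proof -
      have A: "sq_int nu (\<lambda>x. F x - fr x)" by (rule N.sq_int_diff[OF Fsq frsq])
      have B: "sq_int nu (\<lambda>x. fr x - S n x)" by (rule N.sq_int_diff[OF frsq Ssq])
      have "(\<integral>x. (F x - fr x)^2 \<partial>nu) \<le> (\<integral>x. (1 + \<eta>) * (fr x - S n x)^2 + (1 + 1/\<eta>) * (V x)^2 \<partial>nu)"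
      proof (rule integral_mono_AE)
        show "integrable nu (\<lambda>x. (F x - fr x)^2)" using A unfolding sq_int_def by auto
        show "integrable nu (\<lambda>x. (1 + \<eta>) * (fr x - S n x)^2 + (1 + 1/\<eta>) * (V x)^2)"
          using B Vsq unfolding sq_int_def by auto
        show "AE x in nu. (F x - fr x)^2 \<le> (1 + \<eta>) * (fr x - S n x)^2 + (1 + 1/\<eta>) * (V x)^2"
          using SFV
        proof eventually_elim
          case (elim x)
          have "(F x - fr x)^2 = ((fr x - S n x) - (- V x))^2"
            using elim by (simp add: power2_commute algebra_simps)
          also have "\<dots> \<le> (1 + \<eta>) * (fr x - S n x)^2 + (1 + 1/\<eta>) * (- V x)^2"
            by (rule sq_eta[OF eta])
          finally show ?case by simp
        qed
      qed
      also have "\<dots> = (1 + \<eta>) * e n + (1 + 1/\<eta>) * (\<integral>x. (V x)^2 \<partial>nu)"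
        using B Vsq unfolding sq_int_def e_def by simp
      also have "\<dots> \<le> (1 + \<eta>) * e n + (1 + 1/\<eta>) * (T2 * H)"
        using VV eta by (intro add_left_mono mult_left_mono) auto
      finally show ?thesis .
    qed
    have GL1: "(\<integral>x. \<bar>G x\<bar> \<partial>nu) \<le> t powr (s - 1) * sqrt H"
    proof -
      have "(\<integral>x. \<bar>G x\<bar> \<partial>nu) \<le> sqrt (\<integral>x. (G x)^2 \<partial>nu)" by (rule N.L1L2[OF Gsq])
      also have "(\<integral>x. (G x)^2 \<partial>nu) = (\<Sum>j<n. c j * c j)"
        unfolding G_def power2_eq_square by (rule N.orth_sum)
      also have "\<dots> \<le> (\<Sum>j<n. (t powr (s - 1))^2 * (a j)^2)"
        by (intro sum_mono) (use c2 in \<open>simp add: power2_eq_square\<close>)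
      also have "\<dots> = (t powr (s - 1))^2 * (\<Sum>j<n. (a j)^2)" by (simp add: sum_distrib_left)
      also have "\<dots> \<le> (t powr (s - 1))^2 * H" by (intro mult_left_mono bes) auto
      finally have "(\<integral>x. \<bar>G x\<bar> \<partial>nu) \<le> sqrt ((t powr (s - 1))^2 * H)"
        by (simp add: real_sqrt_le_mono)
      also have "\<dots> = t powr (s - 1) * sqrt H" by (simp add: real_sqrt_mult)
      finally show ?thesis .
    qed
    define \<mu>1 where "\<mu>1 = density nu (\<lambda>x. ennreal (N.gp G x))"
    define \<mu>2 where "\<mu>2 = density nu (\<lambda>x. ennreal (N.gn G x))"
    note DM = N.dens_meas[OF Gi]
    have fm: "f_meas K \<mu>1 \<mu>2 = F" unfolding \<mu>1_def \<mu>2_def F_def using DM(3) by (intro ext) simp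
    have Fb': "F \<in> borel_measurable borel" using Fm N.meas_iff by blast
    have mem: "ls_error R (f_meas K \<mu>1 \<mu>2) - ls_error R fr + lamb * tot_var \<mu>1 \<mu>2 \<in> Set"
      unfolding Set_def using DM(1,2) unfolding \<mu>1_def \<mu>2_def by blast
    have "Inf Set \<le> ls_error R (f_meas K \<mu>1 \<mu>2) - ls_error R fr + lamb * tot_var \<mu>1 \<mu>2"
      by (rule cInf_lower[OF mem bdd])
    also have "\<dots> = (\<integral>x. (F x - fr x)^2 \<partial>nu) + lamb * tot_var \<mu>1 \<mu>2"
      unfolding fm using Rs.decomp[OF Fb' Fsq] by simp
    also have "\<dots> \<le> (1 + \<eta>) * e n + (1 + 1/\<eta>) * (T2 * H) + lamb * (t powr (s - 1) * sqrt H)"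
    proof (rule add_mono[OF err])
      have "tot_var \<mu>1 \<mu>2 \<le> t powr (s - 1) * sqrt H"
        using DM(4) GL1 unfolding \<mu>1_def \<mu>2_def by linarith
      then show "lamb * tot_var \<mu>1 \<mu>2 \<le> lamb * (t powr (s - 1) * sqrt H)"
        using lamb by (simp add: mult_left_mono)
    qed
    also have "lamb * (t powr (s - 1) * sqrt H) = T2 * sqrt H"
      unfolding T2_def using lt by (simp add: mult.assoc[symmetric])
    finally show ?thesis .
  qed
  have "Inf Set \<le> (sqrt H + H) * T2"
  proof (rule field_le_epsilon)
    fix \<epsilon> :: real assume ep: "0 < \<epsilon>"
    define \<eta> where "\<eta> = 2 * (T2 * H + 1) / \<epsilon>"
    have TH0: "0 \<le> T2 * H" using T20 H0 by simp
    have eta: "0 < \<eta>" unfolding \<eta>_def using ep TH0 by (intro divide_pos_pos) auto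
    have small: "(1/\<eta>) * (T2 * H) \<le> \<epsilon> / 2"
    proof -
      have "(1/\<eta>) * (T2 * H) = \<epsilon> * (T2 * H) / (2 * (T2 * H + 1))"
        unfolding \<eta>_def using ep TH0 by (simp add: field_simps)
      also have "\<dots> \<le> \<epsilon> * (T2 * H + 1) / (2 * (T2 * H + 1))"
        using ep TH0 by (intro divide_right_mono mult_left_mono) auto
      also have "\<dots> = \<epsilon> / 2" using TH0 by (simp add: field_simps)
      finally show ?thesis .
    qed
    have "(\<lambda>n. (1 + \<eta>) * e n) \<longlonglongrightarrow> (1 + \<eta>) * 0" by (intro tendsto_intros elim)
    then have "eventually (\<lambda>n. dist ((1 + \<eta>) * e n) 0 < \<epsilon> / 2) sequentially"
      using ep by (intro tendstoD) auto
    then obtain n where n: "dist ((1 + \<eta>) * e n) 0 < \<epsilon> / 2"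
      using eventually_sequentially by auto
    have en: "(1 + \<eta>) * e n < \<epsilon> / 2" using n by (simp add: dist_real_def)
    have "Inf Set \<le> (1 + \<eta>) * e n + (1 + 1/\<eta>) * (T2 * H) + T2 * sqrt H" by (rule keyn[OF eta])
    also have "\<dots> = (1 + \<eta>) * e n + (1/\<eta>) * (T2 * H) + (sqrt H + H) * T2"
      by (simp add: algebra_simps)
    also have "\<dots> \<le> (sqrt H + H) * T2 + \<epsilon>" using en small by linarith
    finally show "Inf Set \<le> (sqrt H + H) * T2 + \<epsilon>" .
  qed
  also have "(sqrt H + H) * T2 = (L2_norm_m nu h + (L2_norm_m nu h)^2) * lamb powr (2 * s / (1 + s))"
    unfolding tw T2_def L2_norm_m_def H_def by simp
  finally show ?thesis unfolding Set_def .
qed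

end

theorem lemma3p2:
  fixes \<rho> :: "('a::metric_space \<times> real) measure"
    and K :: "'a \<Rightarrow> 'a \<Rightarrow> real"
    and f\<rho> h :: "'a \<Rightarrow> real"
    and \<phi> :: "nat \<Rightarrow> 'a \<Rightarrow> real"
    and lam :: "nat \<Rightarrow> real"
    and s lamb :: real
  assumes X_compact: "compact (UNIV :: 'a set)"
    and rho_prob: "prob_space \<rho>"
    and rho_borel: "sets \<rho> = sets (borel :: ('a \<times> real) measure)"
    and second_moment: "integrable \<rho> (\<lambda>z. (snd z)^2)"
    and f_reg: "regression_fun \<rho> f\<rho>"
    and K_cont: "continuous_on UNIV (\<lambda>(x, y). K x y)"
    and K_pd: "pos_def_kernel K"
    and K_dense: "closure (span (range (\<lambda>x. Bcontfun (\<lambda>t. K t x)))) = (UNIV :: ('a \<Rightarrow>\<^sub>C real) set)"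
    and onb: "L2_onb (marginal \<rho>) \<phi>"
    and eig: "\<And>j. AE x in marginal \<rho>. int_op K (marginal \<rho>) (\<phi> j) x = lam j * \<phi> j x"
    and lam_dec: "\<And>j. lam (Suc j) \<le> lam j"
    and s_pos: "s > 0"
    and h_L2: "sq_int (marginal \<rho>) h"
    and f_expansion: "(\<lambda>n. L2_norm_m (marginal \<rho>)
          (\<lambda>x. f\<rho> x - (\<Sum>j<n. lam j powr s * (\<integral>t. h t * \<phi> j t \<partial>marginal \<rho>) * \<phi> j x)))
        \<longlonglongrightarrow> 0"
    and lam_pos: "lamb > 0"
  shows "(s < 1 \<longrightarrow>
           Inf {ls_error \<rho> (f_meas K \<mu>1 \<mu>2) - ls_error \<rho> f\<rho> + lamb * tot_var \<mu>1 \<mu>2 | \<mu>1 \<mu>2.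
                  finite_borel \<mu>1 \<and> finite_borel \<mu>2}
           \<le> (L2_norm_m (marginal \<rho>) h + (L2_norm_m (marginal \<rho>) h)^2) * lamb powr (2 * s / (1 + s)))
       \<and> (s \<ge> 1 \<longrightarrow>
           (\<exists>\<mu>1 \<mu>2. finite_borel \<mu>1 \<and> finite_borel \<mu>2 \<and>
              (AE x in marginal \<rho>. f\<rho> x = f_meas K \<mu>1 \<mu>2 x) \<and>
              ls_error \<rho> (f_meas K \<mu>1 \<mu>2) - ls_error \<rho> f\<rho> + lamb * tot_var \<mu>1 \<mu>2
                \<le> lam 0 powr (s - 1) * L2_norm_m (marginal \<rho>) h * lamb))"
proof -
  have R: "rset \<rho> f\<rho>" unfolding rset_def rset_axioms_def
    using rho_prob rho_borel second_moment f_reg by auto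
  have Np: "prob_space (marginal \<rho>)" by (rule rset.prob_nu[OF R])
  have Nk: "konb (marginal \<rho>) K \<phi>"
    unfolding konb_def konb_axioms_def kset_def kset_axioms_def
    using Np rset.sets_nu[OF R] K_cont X_compact onb by auto
  have F: "full \<rho> f\<rho> K \<phi> lam h" unfolding full_def full_axioms_def
    using R Nk K_pd eig lam_dec h_L2 by auto
  show ?thesis
  proof (intro conjI impI)
    assume "s < 1"
    then show "Inf {ls_error \<rho> (f_meas K \<mu>1 \<mu>2) - ls_error \<rho> f\<rho> + lamb * tot_var \<mu>1 \<mu>2 | \<mu>1 \<mu>2.
                  finite_borel \<mu>1 \<and> finite_borel \<mu>2}
           \<le> (L2_norm_m (marginal \<rho>) h + (L2_norm_m (marginal \<rho>) h)^2) * lamb powr (2 * s / (1 + s))"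
      using full.case_lt1[OF F s_pos _ lam_pos f_expansion] by simp
  next
    assume "s \<ge> 1"
    then show "\<exists>\<mu>1 \<mu>2. finite_borel \<mu>1 \<and> finite_borel \<mu>2 \<and>
              (AE x in marginal \<rho>. f\<rho> x = f_meas K \<mu>1 \<mu>2 x) \<and>
              ls_error \<rho> (f_meas K \<mu>1 \<mu>2) - ls_error \<rho> f\<rho> + lamb * tot_var \<mu>1 \<mu>2
                \<le> lam 0 powr (s - 1) * L2_norm_m (marginal \<rho>) h * lamb"
      using full.case_ge1[OF F _ lam_pos f_expansion] by simp
  qed
qed

end
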